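(* Let $n\ge 4$ be even, let $K_n=(V,E)$ be the complete graph on $n$ nodes and let $P_{\mathrm{perfmatch}}(n)=\operatorname{conv}\{\chi(M): M \text{ a perfect matching in } K_n\}\subseteq\mathbb{R}^E$, whose circuits are taken with respect to the linear description $$\bm{x}(\delta(S))\ge 1\ \ \text{for all } S\subset V,\ |S|\text{ odd},\ |S|\ge 3;\qquad \bm{x}(\delta(v))=1\ \ \text{for all } v\in V;\qquad \bm{x}\ge\bm{0}.$$ Then $$\mathcal{CD}(P_{\mathrm{perfmatch}}(n))=\begin{cases}1 & n=4,6,\\ 2 & n=8,\\ 1 & n\ge 10.\end{cases}$$
   Context: $\chi(M)\in\{0,1\}^E$ is the characteristic vector of $M$; $\delta(S)$ is the set of edges with exactly one endpoint in $S$, $\delta(v)=\delta(\{v\})$, and $\bm{x}(F)=\sum_{e\in F}x_e$. Circuits: for a polytope $P=\{\bm{x}: A\bm{x}=\bm{b},\ B\bm{x}\le \bm{d}\}$ given by a fixed linear system, a nonzero vector $\bm{g}$ is a circuit of $P$ if $A\bm{g}=\bm{0}$ and $\operatorname{supp}(B\bm{g})$ is inclusion-minimal among the sets $\operatorname{supp}(B\bm{y})$ with $A\bm{y}=\bm{0}$, $\bm{y}\neq\bm{0}$ (inequalities of the form $\ge$ are rewritten as $\le$). A point $\bm{x}''\in P$ is one circuit step from $\bm{x}'\in P$ if $\bm{x}''=\bm{x}'+\alpha\bm{c}$ for a circuit $\bm{c}$ and $\alpha>0$ maximal such that $\bm{x}'+\alpha\bm{c}\in P$. A circuit walk of length $l$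 from $\bm{x}'$ to $\bm{x}''$ is a sequence $\bm{x}'=\bm{z}^0,\dots,\bm{z}^l=\bm{x}''$ in $P$ with each $\bm{z}^i$ one circuit step from $\bm{z}^{i-1}$; the circuit distance is the length of a shortest such walk, and the circuit diameter $\mathcal{CD}(P)$ is the maximum circuit distance over all ordered pairs of vertices of $P$. *)

theory Defs
  imports Complex_Main
begin

text \<open>Complete graph K_n on vertex set {0..<n}; edges are 2-element subsets.
Vectors in R^E are functions from edges (nat sets) to reals, vanishing outside E.\<close>

definition Kedges :: "nat \<Rightarrow> nat set set" where
  "Kedges n = {e. \<exists>i j. i < n \<and> j < n \<and> i \<noteq> j \<and> e = {i, j}}"

definition RE :: "nat \<Rightarrow> (nat set \<Rightarrow> real) set" where
  "RE n = {x. \<forall>e. e \<notin> Kedges n \<longrightarrow> x e = 0}"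

definition cut :: "nat \<Rightarrow> nat set \<Rightarrow> nat set set" where
  "cut n S = {e \<in> Kedges n. card (e \<inter> S) = 1}"

definition xsum :: "(nat set \<Rightarrow> real) \<Rightarrow> nat set set \<Rightarrow> real" where
  "xsum x F = (\<Sum>e\<in>F. x e)"

definition perfect_matching :: "nat \<Rightarrow> nat set set \<Rightarrow> bool" where
  "perfect_matching n M \<longleftrightarrow> M \<subseteq> Kedges n \<and> (\<forall>v < n. card {e \<in> M. v \<in> e} = 1)"

definition chi :: "nat set set \<Rightarrow> (nat set \<Rightarrow> real)" where
  "chi M = (\<lambda>e. if e \<in> M then 1 else 0)"

definition conv :: "(nat set \<Rightarrow> real) set \<Rightarrow> (nat set \<Rightarrow> real) set" where
  "conv X = {x. \<exists>u. (\<forall>y\<in>X. u y \<ge> 0) \<and> sum u X = 1 \<and> x = (\<lambda>e. \<Sum>y\<in>X. u y * y e)}"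

definition P_perfmatch :: "nat \<Rightarrow> (nat set \<Rightarrow> real) set" where
  "P_perfmatch n = conv (chi ` {M. perfect_matching n M})"

definition vertex_of :: "(nat set \<Rightarrow> real) \<Rightarrow> (nat set \<Rightarrow> real) set \<Rightarrow> bool" where
  "vertex_of x P \<longleftrightarrow> x \<in> P \<and>
     \<not> (\<exists>a\<in>P. \<exists>b\<in>P. a \<noteq> b \<and> (\<exists>t::real. 0 < t \<and> t < 1 \<and> x = (\<lambda>e. (1 - t) * a e + t * b e)))"

text \<open>Odd cut sets indexing the inequalities x(delta(S)) >= 1.\<close>
definition odd_set :: "nat \<Rightarrow> nat set \<Rightarrow> bool" where
  "odd_set n S \<longleftrightarrow> S \<subset> {..<n} \<and> odd (card S) \<and> card S \<ge> 3"

text \<open>Equality part: A y = 0 means y(delta(v)) = 0 for all v.\<close>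
definition kerA :: "nat \<Rightarrow> (nat set \<Rightarrow> real) \<Rightarrow> bool" where
  "kerA n y \<longleftrightarrow> (\<forall>v < n. xsum y (cut n {v}) = 0)"

text \<open>Support of B y: rows are odd cut inequalities (Inl S) and nonnegativity (Inr e).\<close>
definition suppB :: "nat \<Rightarrow> (nat set \<Rightarrow> real) \<Rightarrow> (nat set + nat set) set" where
  "suppB n y = {Inl S | S. odd_set n S \<and> xsum y (cut n S) \<noteq> 0}
             \<union> {Inr e | e. e \<in> Kedges n \<and> y e \<noteq> 0}"

definition circuit :: "nat \<Rightarrow> (nat set \<Rightarrow> real) \<Rightarrow> bool" where
  "circuit n g \<longleftrightarrow> g \<in> RE n \<and> g \<noteq> (\<lambda>_. 0) \<and> kerA n g \<and>
     \<not> (\<exists>y \<in> RE n. y \<noteq> (\<lambda>_. 0) \<and> kerA n y \<and> suppB n y \<subset> suppB n g)"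

definition circuit_step :: "nat \<Rightarrow> (nat set \<Rightarrow> real) set \<Rightarrow> (nat set \<Rightarrow> real) \<Rightarrow> (nat set \<Rightarrow> real) \<Rightarrow> bool" where
  "circuit_step n P x' x'' \<longleftrightarrow> x' \<in> P \<and>
     (\<exists>c \<alpha>. circuit n c \<and> \<alpha> > 0 \<and> x'' = (\<lambda>e. x' e + \<alpha> * c e) \<and> x'' \<in> P \<and>
        (\<forall>\<beta>. \<beta> > \<alpha> \<longrightarrow> (\<lambda>e. x' e + \<beta> * c e) \<notin> P))"

definition circuit_walk :: "nat \<Rightarrow> (nat set \<Rightarrow> real) set \<Rightarrow> (nat set \<Rightarrow> real) \<Rightarrow> (nat set \<Rightarrow> real) \<Rightarrow> nat \<Rightarrow> bool" where
  "circuit_walk n P x' x'' l \<longleftrightarrow> (\<exists>z :: nat \<Rightarrow> (nat set \<Rightarrow> real).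
     z 0 = x' \<and> z l = x'' \<and> (\<forall>i \<le> l. z i \<in> P) \<and> (\<forall>i < l. circuit_step n P (z i) (z (Suc i))))"

definition circuit_distance :: "nat \<Rightarrow> (nat set \<Rightarrow> real) set \<Rightarrow> (nat set \<Rightarrow> real) \<Rightarrow> (nat set \<Rightarrow> real) \<Rightarrow> nat" where
  "circuit_distance n P x' x'' = (LEAST l. circuit_walk n P x' x'' l)"

definition circuit_diameter :: "nat \<Rightarrow> (nat set \<Rightarrow> real) set \<Rightarrow> nat" where
  "circuit_diameter n P = Max {circuit_distance n P x y | x y. vertex_of x P \<and> vertex_of y P}"

end

theory Submission
  imports Defs
begin


definition partner :: "nat set set \<Rightarrow> nat \<Rightarrow> nat" where
  "partner M v = (THE u. {v,u} \<in> M)"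

lemma Kedges_fin: "finite (Kedges n)"
proof -
  have "Kedges n \<subseteq> Pow {..<n}" unfolding Kedges_def by auto
  thus ?thesis by (rule finite_subset) auto
qed

lemma Kedges_mem: "{i,j} \<in> Kedges n \<longleftrightarrow> i < n \<and> j < n \<and> i \<noteq> j"
  unfolding Kedges_def by (auto simp: doubleton_eq_iff)

lemma Kedges_lt: "e \<in> Kedges n \<Longrightarrow> v \<in> e \<Longrightarrow> v < n"
  unfolding Kedges_def by auto

lemma cut_single: "cut n {v} = {e \<in> Kedges n. v \<in> e}"
proof -
  have "card (e \<inter> {v}) = 1 \<longleftrightarrow> v \<in> e" for e :: "nat set"
    by (cases "v \<in> e") auto
  thus ?thesis unfolding cut_def by auto
qed

lemma pm_ex:
  assumes "perfect_matching n M" "v < n"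
  shows "\<exists>u. u < n \<and> u \<noteq> v \<and> {v,u} \<in> M \<and> (\<forall>e\<in>M. v \<in> e \<longrightarrow> e = {v,u})"
proof -
  from assms have "card {e \<in> M. v \<in> e} = 1" unfolding perfect_matching_def by auto
  then obtain e where e: "{e \<in> M. v \<in> e} = {e}" by (auto simp: card_1_singleton_iff)
  hence eM: "e \<in> M" "v \<in> e" by auto
  with assms have "e \<in> Kedges n" unfolding perfect_matching_def by auto
  then obtain i j where ij: "i < n" "j < n" "i \<noteq> j" "e = {i,j}" unfolding Kedges_def by auto
  then obtain u where u: "u < n" "u \<noteq> v" "e = {v,u}" using eM by auto
  have all: "\<forall>e'\<in>M. v \<in> e' \<longrightarrow> e' = {v,u}"
  proof (intro ballI impI)
    fix e' assume "e' \<in> M" "v \<in> e'"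
    hence "e' \<in> {e \<in> M. v \<in> e}" by simp
    with e have "e' = e" by simp
    with u show "e' = {v,u}" by simp
  qed
  have "{v,u} \<in> M" using u eM by simp
  thus ?thesis using u all by blast
qed

lemma partner:
  assumes "perfect_matching n M" "v < n"
  shows "partner M v < n" "partner M v \<noteq> v" "{v, partner M v} \<in> M"
    "\<And>e. e \<in> M \<Longrightarrow> v \<in> e \<Longrightarrow> e = {v, partner M v}"
proof -
  obtain u where u: "u < n" "u \<noteq> v" "{v,u} \<in> M" "\<forall>e\<in>M. v \<in> e \<longrightarrow> e = {v,u}"
    using pm_ex[OF assms] by blast
  have p: "partner M v = u" unfolding partner_def
  proof (rule the_equality)
    fix w assume w: "{v,w} \<in> M"
    have "{v,w} = {v,u}" using bspec[OF u(4) w] by simp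
    thus "w = u" using u(2) by (auto simp: doubleton_eq_iff)
  qed (fact u(3))
  show "partner M v < n" "partner M v \<noteq> v" "{v, partner M v} \<in> M" using u(1-3) p by simp_all
  show "\<And>e. e \<in> M \<Longrightarrow> v \<in> e \<Longrightarrow> e = {v, partner M v}" 
  proof -
    fix e assume "e \<in> M" "v \<in> e"
    thus "e = {v, partner M v}" using bspec[OF u(4) \<open>e \<in> M\<close>] p by simp
  qed
qed

lemma partner_eq:
  assumes "perfect_matching n M" "v < n" "{v,u} \<in> M"
  shows "partner M v = u"
proof -
  have "{v,u} = {v, partner M v}" using partner(4)[OF assms(1,2) assms(3)] by simp
  thus ?thesis by (auto simp: doubleton_eq_iff)
qed

lemma partner_invol:
  assumes "perfect_matching n M" "v < n"
  shows "partner M (partner M v) = v"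
  using partner_eq[OF assms(1) partner(1)[OF assms]] partner(3)[OF assms]
  by (simp add: insert_commute)

lemma cut_decomp:
  assumes "finite S"
  shows "xsum z (cut n S) = (\<Sum>v\<in>S. xsum z (cut n {v})) - 2 * (\<Sum>e\<in>{e\<in>Kedges n. e \<subseteq> S}. z e)"
proof -
  have K: "finite (Kedges n)" by (rule Kedges_fin)
  have "(\<Sum>v\<in>S. xsum z (cut n {v})) = (\<Sum>v\<in>S. \<Sum>e\<in>Kedges n. if v \<in> e then z e else 0)"
    unfolding xsum_def cut_single by (simp add: sum.inter_filter[OF K])
  also have "\<dots> = (\<Sum>e\<in>Kedges n. \<Sum>v\<in>S. if v \<in> e then z e else 0)" by (rule sum.swap)
  also have "\<dots> = (\<Sum>e\<in>Kedges n. (if card (e \<inter> S) = 1 then z e else 0) + 2 * (if e \<subseteq> S then z e else 0))"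
  proof (rule sum.cong[OF refl])
    fix e assume "e \<in> Kedges n"
    then obtain i j where ij: "i \<noteq> j" "e = {i,j}" unfolding Kedges_def by auto
    have "(\<Sum>v\<in>S. if v \<in> e then z e else 0) = real (card (S \<inter> e)) * z e"
    proof -
      have "(\<Sum>v\<in>S. if v \<in> e then z e else 0) = (\<Sum>v\<in>{v\<in>S. v \<in> e}. z e)"
        by (rule sum.inter_filter[OF assms, symmetric])
      also have "{v\<in>S. v \<in> e} = S \<inter> e" by auto
      finally show ?thesis by simp
    qed
    also have "\<dots> = real (card (e \<inter> S)) * z e"
      by (simp only: Int_commute)
    also have "\<dots> = (if card (e \<inter> S) = 1 then z e else 0) + 2 * (if e \<subseteq> S then z e else 0)"
      using ij by (cases "i \<in> S"; cases "j \<in> S"; simp add: Int_insert_left)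
    finally show "(\<Sum>v\<in>S. if v \<in> e then z e else 0) = \<dots>" .
  qed
  also have "\<dots> = (\<Sum>e\<in>Kedges n. if card (e \<inter> S) = 1 then z e else 0) + 2 * (\<Sum>e\<in>Kedges n. if e \<subseteq> S then z e else 0)"
    by (simp only: sum.distrib sum_distrib_left)
  also have "\<dots> = xsum z (cut n S) + 2 * (\<Sum>e\<in>{e\<in>Kedges n. e \<subseteq> S}. z e)"
    unfolding xsum_def cut_def by (simp only: sum.inter_filter[OF K])
  finally show ?thesis by simp
qed


lemma pm_sub: "perfect_matching n M \<Longrightarrow> M \<subseteq> Kedges n"
  unfolding perfect_matching_def by auto

lemma chi_cut_single:
  assumes "perfect_matching n M" "v < n"
  shows "xsum (chi M) (cut n {v}) = 1"
proof -
  have "xsum (chi M) (cut n {v}) = (\<Sum>e\<in>{e\<in>Kedges n. v \<in> e}. if e \<in> M then 1 else 0)"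
    unfolding xsum_def chi_def cut_single by simp
  also have "\<dots> = (\<Sum>e\<in>{e\<in>{e\<in>Kedges n. v \<in> e}. e \<in> M}. 1)"
    by (rule sum.inter_filter[symmetric]) (simp add: Kedges_fin)
  also have "{e\<in>{e\<in>Kedges n. v \<in> e}. e \<in> M} = {e \<in> M. v \<in> e}"
    using pm_sub[OF assms(1)] by auto
  finally have "xsum (chi M) (cut n {v}) = real (card {e \<in> M. v \<in> e})" by simp
  moreover have "card {e \<in> M. v \<in> e} = 1" using assms unfolding perfect_matching_def by auto
  ultimately show ?thesis by simp
qed

locale TPM =
  fixes n :: nat and M N :: "nat set set"
  assumes PM: "perfect_matching n M" and PN: "perfect_matching n N"
begin

abbreviation "pm \<equiv> partner M"
abbreviation "pn \<equiv> partner N"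

definition VD where "VD = {v. v < n \<and> pm v \<noteq> pn v}"
definition d where "d = (\<lambda>e. chi N e - chi M e)"
definition blA where "blA a = {pn a, a, pm a, pn (pm a)}"
definition blB where "blB b = {pm b, b, pn b, pm (pn b)}"

lemma pm_lt: "v < n \<Longrightarrow> pm v < n" using partner(1)[OF PM] .
lemma pn_lt: "v < n \<Longrightarrow> pn v < n" using partner(1)[OF PN] .
lemma pm_ne: "v < n \<Longrightarrow> pm v \<noteq> v" using partner(2)[OF PM] .
lemma pn_ne: "v < n \<Longrightarrow> pn v \<noteq> v" using partner(2)[OF PN] .
lemma pm_M: "v < n \<Longrightarrow> {v, pm v} \<in> M" using partner(3)[OF PM] .
lemma pn_N: "v < n \<Longrightarrow> {v, pn v} \<in> N" using partner(3)[OF PN] .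
lemma pm_pm: "v < n \<Longrightarrow> pm (pm v) = v" using partner_invol[OF PM] .
lemma pn_pn: "v < n \<Longrightarrow> pn (pn v) = v" using partner_invol[OF PN] .
lemma pm_uniq: "v < n \<Longrightarrow> e \<in> M \<Longrightarrow> v \<in> e \<Longrightarrow> e = {v, pm v}" using partner(4)[OF PM] .
lemma pn_uniq: "v < n \<Longrightarrow> e \<in> N \<Longrightarrow> v \<in> e \<Longrightarrow> e = {v, pn v}" using partner(4)[OF PN] .
lemma pm_eq: "v < n \<Longrightarrow> {v,u} \<in> M \<Longrightarrow> pm v = u" using partner_eq[OF PM] .
lemma pn_eq: "v < n \<Longrightarrow> {v,u} \<in> N \<Longrightarrow> pn v = u" using partner_eq[OF PN] .
lemma M_K: "M \<subseteq> Kedges n" using pm_sub[OF PM] .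
lemma N_K: "N \<subseteq> Kedges n" using pm_sub[OF PN] .

lemma VD_lt: "v \<in> VD \<Longrightarrow> v < n" unfolding VD_def by simp
lemma VD_ne: "v \<in> VD \<Longrightarrow> pm v \<noteq> pn v" unfolding VD_def by simp

lemma VD_pm: "v \<in> VD \<Longrightarrow> pm v \<in> VD"
proof -
  assume v: "v \<in> VD"
  hence vn: "v < n" by (rule VD_lt)
  have "pn (pm v) \<noteq> v"
  proof
    assume "pn (pm v) = v"
    hence "pn (pn (pm v)) = pn v" by simp
    hence "pn v = pm v" using pn_pn[OF pm_lt[OF vn]] by simp
    thus False using VD_ne[OF v] by simp
  qed
  thus ?thesis using pm_pm[OF vn] pm_lt[OF vn] unfolding VD_def by auto
qed

lemma VD_pn: "v \<in> VD \<Longrightarrow> pn v \<in> VD"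
proof -
  assume v: "v \<in> VD"
  hence vn: "v < n" by (rule VD_lt)
  have "pm (pn v) \<noteq> v"
  proof
    assume "pm (pn v) = v"
    hence "pm (pm (pn v)) = pm v" by simp
    hence "pm v = pn v" using pm_pm[OF pn_lt[OF vn]] by simp
    thus False using VD_ne[OF v] by simp
  qed
  thus ?thesis using pn_pn[OF vn] pn_lt[OF vn] unfolding VD_def by auto
qed

lemma VD_pmN: "v \<in> VD \<Longrightarrow> {v, pm v} \<notin> N"
proof
  assume v: "v \<in> VD" and e: "{v, pm v} \<in> N"
  have "pn v = pm v" using pn_eq[OF VD_lt[OF v] e] .
  thus False using VD_ne[OF v] by simp
qed
lemma VD_pnM: "v \<in> VD \<Longrightarrow> {v, pn v} \<notin> M"
proof
  assume v: "v \<in> VD" and e: "{v, pn v} \<in> M"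
  have "pm v = pn v" using pm_eq[OF VD_lt[OF v] e] .
  thus False using VD_ne[OF v] by simp
qed

lemma notVD_M: "v < n \<Longrightarrow> v \<notin> VD \<Longrightarrow> {v, pm v} \<in> N"
proof -
  assume v: "v < n" "v \<notin> VD"
  hence "pm v = pn v" unfolding VD_def by simp
  thus ?thesis using pn_N[OF v(1)] by simp
qed
lemma notVD_N: "v < n \<Longrightarrow> v \<notin> VD \<Longrightarrow> {v, pn v} \<in> M"
proof -
  assume v: "v < n" "v \<notin> VD"
  hence "pm v = pn v" unfolding VD_def by simp
  thus ?thesis using pm_M[OF v(1)] by simp
qed

lemma blA_facts:
  assumes a: "a \<in> VD"
  shows "blA a \<subseteq> VD" "card (blA a) = 4"
    "pn a \<noteq> a" "pm a \<noteq> a" "pn a \<noteq> pm a" "pn (pm a) \<noteq> pn a" "pn (pm a) \<noteq> a" "pn (pm a) \<noteq> pm a"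
proof -
  have an: "a < n" using VD_lt[OF a] .
  have a1: "pm a \<in> VD" using VD_pm[OF a] .
  have a1n: "pm a < n" using VD_lt[OF a1] .
  show "pn a \<noteq> a" using pn_ne[OF an] .
  show "pm a \<noteq> a" using pm_ne[OF an] .
  show "pn a \<noteq> pm a" using VD_ne[OF a] by simp
  show "pn (pm a) \<noteq> pm a" using pn_ne[OF a1n] .
  show "pn (pm a) \<noteq> a" using VD_ne[OF a1] pm_pm[OF an] by simp
  show "pn (pm a) \<noteq> pn a"
  proof
    assume "pn (pm a) = pn a"
    hence "pn (pn (pm a)) = pn (pn a)" by simp
    thus False using pn_pn[OF an] pn_pn[OF a1n] pm_ne[OF an] by simp
  qed
  show "blA a \<subseteq> VD" unfolding blA_def using a a1 VD_pn[OF a] VD_pn[OF a1] by auto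
  show "card (blA a) = 4" unfolding blA_def
    using pn_ne[OF an] pm_ne[OF an] VD_ne[OF a] pn_ne[OF a1n] \<open>pn (pm a) \<noteq> a\<close> \<open>pn (pm a) \<noteq> pn a\<close>
    by auto
qed

lemma blB_facts:
  assumes b: "b \<in> VD"
  shows "blB b \<subseteq> VD" "card (blB b) = 4"
    "pm b \<noteq> b" "pn b \<noteq> b" "pm b \<noteq> pn b" "pm (pn b) \<noteq> pm b" "pm (pn b) \<noteq> b" "pm (pn b) \<noteq> pn b"
proof -
  have bn: "b < n" using VD_lt[OF b] .
  have b1: "pn b \<in> VD" using VD_pn[OF b] .
  have b1n: "pn b < n" using VD_lt[OF b1] .
  show "pm b \<noteq> b" using pm_ne[OF bn] .
  show "pn b \<noteq> b" using pn_ne[OF bn] .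
  show "pm b \<noteq> pn b" using VD_ne[OF b] by simp
  show "pm (pn b) \<noteq> pn b" using pm_ne[OF b1n] .
  show "pm (pn b) \<noteq> b" using VD_ne[OF b1] pn_pn[OF bn] by simp
  show "pm (pn b) \<noteq> pm b"
  proof
    assume "pm (pn b) = pm b"
    hence "pm (pm (pn b)) = pm (pm b)" by simp
    thus False using pm_pm[OF bn] pm_pm[OF b1n] pn_ne[OF bn] by simp
  qed
  show "blB b \<subseteq> VD" unfolding blB_def using b b1 VD_pm[OF b] VD_pm[OF b1] by auto
  show "card (blB b) = 4" unfolding blB_def
    using pn_ne[OF bn] pm_ne[OF bn] VD_ne[OF b] pm_ne[OF b1n] \<open>pm (pn b) \<noteq> b\<close> \<open>pm (pn b) \<noteq> pm b\<close>
    by auto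
qed


lemma z_out:
  assumes "\<And>e. z e \<noteq> 0 \<Longrightarrow> chi N e \<noteq> chi M e"
  shows "(e \<in> M \<longleftrightarrow> e \<in> N) \<Longrightarrow> z e = 0"
  using assms[of e] unfolding chi_def by (cases "e \<in> M"; cases "e \<in> N") auto

lemma inside_sum:
  assumes a: "a \<in> VD" and b: "b \<in> VD" and dj: "blA a \<inter> blB b = {}"
    and p: "p < n" "p \<notin> blA a \<union> blB b"
    and zk: "kerA n z" and zs: "\<And>e. z e \<noteq> 0 \<Longrightarrow> chi N e \<noteq> chi M e"
  shows "xsum z (cut n {a, pm a, b, pn b, p}) = -2 * (z {a, pm a} + z {b, pn b})"
    "card {a, pm a, b, pn b, p} = 5" "odd_set n {a, pm a, b, pn b, p}"
proof -
  define S where "S = {a, pm a, b, pn b, p}"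
  have an: "a < n" using VD_lt[OF a] .
  have bn: "b < n" using VD_lt[OF b] .
  have a1: "pm a \<in> VD" using VD_pm[OF a] .
  have b1: "pn b \<in> VD" using VD_pn[OF b] .
  have a1n: "pm a < n" using VD_lt[OF a1] .
  have b1n: "pn b < n" using VD_lt[OF b1] .
  have djx: "\<And>x. x \<in> blA a \<Longrightarrow> x \<in> blB b \<Longrightarrow> False" using dj by blast
  note FA = blA_facts[OF a] and FB = blB_facts[OF b]
  have i1: "a \<noteq> pm b" "a \<noteq> b" "a \<noteq> pn b" "a \<noteq> pm (pn b)"
    using djx[of a] unfolding blA_def blB_def by auto
  have i2: "pm a \<noteq> pm b" "pm a \<noteq> b" "pm a \<noteq> pn b" "pm a \<noteq> pm (pn b)"
    using djx[of "pm a"] unfolding blA_def blB_def by auto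
  have i3: "pn a \<noteq> pm b" "pn a \<noteq> b" "pn a \<noteq> pn b" "pn a \<noteq> pm (pn b)"
    using djx[of "pn a"] unfolding blA_def blB_def by auto
  have i4: "pn (pm a) \<noteq> pm b" "pn (pm a) \<noteq> b" "pn (pm a) \<noteq> pn b" "pn (pm a) \<noteq> pm (pn b)"
    using djx[of "pn (pm a)"] unfolding blA_def blB_def by auto
  have ip: "p \<noteq> pn a" "p \<noteq> a" "p \<noteq> pm a" "p \<noteq> pn (pm a)" "p \<noteq> pm b" "p \<noteq> b" "p \<noteq> pn b" "p \<noteq> pm (pn b)"
    using p(2) unfolding blA_def blB_def by auto
  have Sn: "S \<subseteq> {..<n}" unfolding S_def using an bn a1n b1n p(1) by auto
  have nS1: "pm b \<notin> S" unfolding S_def using i1 i2 ip FB by auto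
  have nS2: "pm (pn b) \<notin> S" unfolding S_def using i1 i2 ip FB by auto
  have nS3: "pn a \<notin> S" unfolding S_def using i3 ip FA by auto
  have nS4: "pn (pm a) \<notin> S" unfolding S_def using i4 ip FA by auto
  have ppm: "pm (pm p) = p" using pm_pm[OF p(1)] .
  have ppn: "pn (pn p) = p" using pn_pn[OF p(1)] .
  have nS5: "pm p \<notin> S"
  proof
    assume "pm p \<in> S"
    hence "pm p = a \<or> pm p = pm a \<or> pm p = b \<or> pm p = pn b \<or> pm p = p" unfolding S_def by auto
    thus False
    proof (elim disjE)
      assume "pm p = a" hence "pm (pm p) = pm a" by simp
      thus False using ppm ip by simp
    next
      assume "pm p = pm a" hence "pm (pm p) = pm (pm a)" by simp
      thus False using ppm ip pm_pm[OF an] by simp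
    next
      assume "pm p = b" hence "pm (pm p) = pm b" by simp
      thus False using ppm ip by simp
    next
      assume "pm p = pn b" hence "pm (pm p) = pm (pn b)" by simp
      thus False using ppm ip by simp
    next
      assume "pm p = p" thus False using pm_ne[OF p(1)] by simp
    qed
  qed
  have nS6: "pn p \<notin> S"
  proof
    assume "pn p \<in> S"
    hence "pn p = a \<or> pn p = pm a \<or> pn p = b \<or> pn p = pn b \<or> pn p = p" unfolding S_def by auto
    thus False
    proof (elim disjE)
      assume "pn p = a" hence "pn (pn p) = pn a" by simp
      thus False using ppn ip by simp
    next
      assume "pn p = pm a" hence "pn (pn p) = pn (pm a)" by simp
      thus False using ppn ip by simp
    next
      assume "pn p = b" hence "pn (pn p) = pn b" by simp
      thus False using ppn ip by simp
    next
      assume "pn p = pn b" hence "pn (pn p) = pn (pn b)" by simp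
      thus False using ppn ip pn_pn[OF bn] by simp
    next
      assume "pn p = p" thus False using pn_ne[OF p(1)] by simp
    qed
  qed
  have finS: "finite S" unfolding S_def by simp
  have cardS: "card S = 5" unfolding S_def using i1 i2 ip FA FB by auto
  thus "card {a, pm a, b, pn b, p} = 5" unfolding S_def .
  have "S \<subset> {..<n}" using Sn nS3 pn_lt[OF an] by auto
  thus "odd_set n {a, pm a, b, pn b, p}" unfolding odd_set_def S_def[symmetric] using cardS by simp
  define F2 where "F2 = {{a, pm a}, {b, pn b}}"
  have e1: "{a, pm a} \<in> Kedges n" using pm_M[OF an] M_K by auto
  have e2: "{b, pn b} \<in> Kedges n" using pn_N[OF bn] N_K by auto
  have "(\<Sum>e\<in>{e\<in>Kedges n. e \<subseteq> S}. z e) = (\<Sum>e\<in>F2. z e)"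
  proof (rule sum.mono_neutral_right)
    show "finite {e\<in>Kedges n. e \<subseteq> S}" using Kedges_fin by simp
    show "F2 \<subseteq> {e\<in>Kedges n. e \<subseteq> S}" unfolding F2_def S_def using e1 e2 by auto
    show "\<forall>e\<in>{e\<in>Kedges n. e \<subseteq> S} - F2. z e = 0"
    proof
      fix e assume e: "e \<in> {e\<in>Kedges n. e \<subseteq> S} - F2"
      show "z e = 0"
      proof (rule ccontr)
        assume ze: "z e \<noteq> 0"
        hence MN: "(e \<in> M) \<noteq> (e \<in> N)" using zs[of e] unfolding chi_def by (auto split: if_splits)
        from e obtain i j where ij: "i < n" "j < n" "i \<noteq> j" "e = {i,j}" unfolding Kedges_def by auto
        have iS: "i \<in> S" using e ij by auto
        show False
        proof (cases "e \<in> M")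
          case True
          hence ee: "e = {i, pm i}" using pm_uniq[OF ij(1)] ij by simp
          hence pS: "pm i \<in> S" using e by auto
          have "i = a \<or> i = pm a \<or> i = b \<or> i = pn b \<or> i = p" using iS unfolding S_def by auto
          thus False
          proof (elim disjE)
            assume "i = a" thus False using e ee unfolding F2_def by auto
          next
            assume "i = pm a" thus False using e ee pm_pm[OF an] unfolding F2_def by (auto simp: insert_commute)
          next
            assume "i = b" thus False using pS nS1 by simp
          next
            assume "i = pn b" thus False using pS nS2 by simp
          next
            assume "i = p" thus False using pS nS5 by simp
          qed
        next
          case False
          hence "e \<in> N" using MN by simp
          hence ee: "e = {i, pn i}" using pn_uniq[OF ij(1)] ij by simp
          hence pS: "pn i \<in> S" using e by auto
          have "i = a \<or> i = pm a \<or> i = b \<or> i = pn b \<or> i = p" using iS unfolding S_def by auto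
          thus False
          proof (elim disjE)
            assume "i = b" thus False using e ee unfolding F2_def by auto
          next
            assume "i = pn b" thus False using e ee pn_pn[OF bn] unfolding F2_def by (auto simp: insert_commute)
          next
            assume "i = a" thus False using pS nS3 by simp
          next
            assume "i = pm a" thus False using pS nS4 by simp
          next
            assume "i = p" thus False using pS nS6 by simp
          qed
        qed
      qed
    qed
  qed
  also have "\<dots> = z {a, pm a} + z {b, pn b}"
  proof -
    have "{a, pm a} \<noteq> {b, pn b}" using i1 by (auto simp: doubleton_eq_iff)
    thus ?thesis unfolding F2_def by simp
  qed
  finally have inner: "(\<Sum>e\<in>{e\<in>Kedges n. e \<subseteq> S}. z e) = z {a, pm a} + z {b, pn b}" .
  have "(\<Sum>v\<in>S. xsum z (cut n {v})) = 0"
  proof (rule sum.neutral, rule ballI)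
    fix v assume "v \<in> S" hence "v < n" using Sn by auto
    thus "xsum z (cut n {v}) = 0" using zk unfolding kerA_def by simp
  qed
  thus "xsum z (cut n {a, pm a, b, pn b, p}) = -2 * (z {a, pm a} + z {b, pn b})"
    using cut_decomp[OF finS, of z n] inner unfolding S_def by simp
qed


lemma d_kerA: "kerA n d"
  unfolding kerA_def
proof (intro allI impI)
  fix v assume v: "v < n"
  have "xsum d (cut n {v}) = xsum (chi N) (cut n {v}) - xsum (chi M) (cut n {v})"
    unfolding xsum_def d_def by (simp add: sum_subtractf)
  thus "xsum d (cut n {v}) = 0" using chi_cut_single[OF PM v] chi_cut_single[OF PN v] by simp
qed

lemma d_supp: "d e \<noteq> 0 \<Longrightarrow> chi N e \<noteq> chi M e" unfolding d_def by simp

lemma d_RE: "d \<in> RE n"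
  unfolding RE_def d_def chi_def using M_K N_K by auto

lemma balance:
  assumes zk: "kerA n z" and zs: "\<And>e. z e \<noteq> 0 \<Longrightarrow> chi N e \<noteq> chi M e" and v: "v \<in> VD"
  shows "z {v, pm v} + z {v, pn v} = 0"
proof -
  have vn: "v < n" using VD_lt[OF v] .
  have ne: "{v, pm v} \<noteq> {v, pn v}" using VD_ne[OF v] pm_ne[OF vn] by (auto simp: doubleton_eq_iff)
  have "0 = xsum z (cut n {v})" using zk vn unfolding kerA_def by simp
  also have "\<dots> = (\<Sum>e\<in>{e\<in>Kedges n. v \<in> e}. z e)" unfolding xsum_def cut_single ..
  also have "\<dots> = (\<Sum>e\<in>{{v, pm v}, {v, pn v}}. z e)"
  proof (rule sum.mono_neutral_right)
    show "finite {e\<in>Kedges n. v \<in> e}" using Kedges_fin by simp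
    show "{{v, pm v}, {v, pn v}} \<subseteq> {e\<in>Kedges n. v \<in> e}" using pm_M[OF vn] pn_N[OF vn] M_K N_K by auto
    show "\<forall>e\<in>{e\<in>Kedges n. v \<in> e} - {{v, pm v}, {v, pn v}}. z e = 0"
    proof
      fix e assume e: "e \<in> {e\<in>Kedges n. v \<in> e} - {{v, pm v}, {v, pn v}}"
      have "e \<notin> M"
      proof
        assume "e \<in> M" hence "e = {v, pm v}" using pm_uniq[OF vn] e by simp
        thus False using e by simp
      qed
      moreover have "e \<notin> N"
      proof
        assume "e \<in> N" hence "e = {v, pn v}" using pn_uniq[OF vn] e by simp
        thus False using e by simp
      qed
      ultimately show "z e = 0" using zs[of e] unfolding chi_def by auto
    qed
  qed
  also have "\<dots> = z {v, pm v} + z {v, pn v}" using ne by simp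
  finally show ?thesis by simp
qed

lemma key:
  assumes yk: "kerA n y" and ys: "\<And>e. y e \<noteq> 0 \<Longrightarrow> chi N e \<noteq> chi M e"
    and yo: "\<And>S. odd_set n S \<Longrightarrow> xsum d (cut n S) = 0 \<Longrightarrow> xsum y (cut n S) = 0"
    and sep: "\<And>a b. a \<in> VD \<Longrightarrow> b \<in> VD \<Longrightarrow> blA a \<inter> blB b = {} \<Longrightarrow> \<exists>p<n. p \<notin> blA a \<union> blB b"
  shows "\<exists>c. \<forall>e. y e = c * d e"
proof -
  define g where "g v = y {v, pm v}" for v
  have bal: "v \<in> VD \<Longrightarrow> y {v, pn v} = - g v" for v using balance[OF yk ys] unfolding g_def by fastforce
  have gM: "v < n \<Longrightarrow> g (pm v) = g v" for v unfolding g_def using pm_pm[of v] by (simp add: insert_commute)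
  have gN: "v \<in> VD \<Longrightarrow> g (pn v) = g v" for v
  proof -
    assume v: "v \<in> VD"
    have vn: "v < n" using VD_lt[OF v] .
    have "g (pn v) = - y {pn v, pn (pn v)}" using bal[OF VD_pn[OF v]] by simp
    also have "\<dots> = - y {v, pn v}" using pn_pn[OF vn] by (simp add: insert_commute)
    also have "\<dots> = g v" using bal[OF v] by simp
    finally show ?thesis .
  qed
  have gA: "a \<in> VD \<Longrightarrow> x \<in> blA a \<Longrightarrow> g x = g a" for a x
  proof -
    assume a: "a \<in> VD" and x: "x \<in> blA a"
    have an: "a < n" using VD_lt[OF a] .
    have "g (pn (pm a)) = g a" using gN[OF VD_pm[OF a]] gM[OF an] by simp
    thus ?thesis using x gN[OF a] gM[OF an] unfolding blA_def by auto
  qed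
  have gB: "b \<in> VD \<Longrightarrow> x \<in> blB b \<Longrightarrow> g x = g b" for b x
  proof -
    assume b: "b \<in> VD" and x: "x \<in> blB b"
    have bn: "b < n" using VD_lt[OF b] .
    have "g (pm (pn b)) = g b" using gN[OF b] gM[OF VD_lt[OF VD_pn[OF b]]] by simp
    thus ?thesis using x gN[OF b] gM[OF bn] unfolding blB_def by auto
  qed
  have gab: "a \<in> VD \<Longrightarrow> b \<in> VD \<Longrightarrow> g a = g b" for a b
  proof -
    assume a: "a \<in> VD" and b: "b \<in> VD"
    show "g a = g b"
    proof (cases "blA a \<inter> blB b = {}")
      case False
      then obtain x where "x \<in> blA a" "x \<in> blB b" by blast
      thus ?thesis using gA[OF a] gB[OF b] by metis
    next
      case True
      then obtain p where p: "p < n" "p \<notin> blA a \<union> blB b" using sep[OF a b] by blast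
      note I = inside_sum[OF a b True p]
      have an: "a < n" using VD_lt[OF a] .
      have bn: "b < n" using VD_lt[OF b] .
      have "d {a, pm a} = -1" using pm_M[OF an] VD_pmN[OF a] unfolding d_def chi_def by simp
      moreover have "d {b, pn b} = 1" using pn_N[OF bn] VD_pnM[OF b] unfolding d_def chi_def by simp
      ultimately have "xsum d (cut n {a, pm a, b, pn b, p}) = 0" using I(1)[OF d_kerA d_supp] by simp
      hence "xsum y (cut n {a, pm a, b, pn b, p}) = 0" using yo I(3)[OF d_kerA d_supp] by blast
      hence "y {a, pm a} + y {b, pn b} = 0" using I(1)[OF yk ys] by simp
      thus ?thesis using bal[OF b] unfolding g_def by simp
    qed
  qed
  obtain c where c: "\<And>v. v \<in> VD \<Longrightarrow> g v = c"
  proof (cases "VD = {}")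
    case True thus ?thesis using that by blast
  next
    case False then obtain a0 where "a0 \<in> VD" by blast
    thus ?thesis using that gab by blast
  qed
  have "y e = (- c) * d e" for e
  proof (cases "e \<in> M \<longleftrightarrow> e \<in> N")
    case True
    thus ?thesis using ys[of e] unfolding d_def chi_def by (auto split: if_splits)
  next
    case False
    show ?thesis
    proof (cases "e \<in> M")
      case True
      hence eN: "e \<notin> N" using False by simp
      from True M_K obtain i j where ij: "i < n" "e = {i,j}" unfolding Kedges_def by blast
      have ee: "e = {i, pm i}" using pm_uniq[OF ij(1) True] ij by simp
      have iV: "i \<in> VD" using notVD_M[OF ij(1)] ee eN by blast
      have "y e = c" using c[OF iV] ee unfolding g_def by simp
      thus ?thesis using True eN unfolding d_def chi_def by simp
    next
      case FM: False
      hence eN: "e \<in> N" using False by simp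
      from eN N_K obtain i j where ij: "i < n" "e = {i,j}" unfolding Kedges_def by blast
      have ee: "e = {i, pn i}" using pn_uniq[OF ij(1) eN] ij by simp
      have iV: "i \<in> VD" using notVD_N[OF ij(1)] ee FM by blast
      have "y e = - c" using c[OF iV] bal[OF iV] ee by simp
      thus ?thesis using FM eN unfolding d_def chi_def by simp
    qed
  qed
  thus ?thesis by blast
qed


lemma M_minus_N: "M \<noteq> N \<Longrightarrow> \<exists>e\<in>M. e \<notin> N"
proof (rule ccontr)
  assume ne: "M \<noteq> N" and "\<not> (\<exists>e\<in>M. e \<notin> N)"
  hence sub: "M \<subseteq> N" by blast
  have "N \<subseteq> M"
  proof
    fix e assume e: "e \<in> N"
    from e N_K obtain i j where ij: "i < n" "e = {i,j}" unfolding Kedges_def by blast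
    have ee: "e = {i, pn i}" using pn_uniq[OF ij(1) e] ij by simp
    have "{i, pm i} \<in> N" using pm_M[OF ij(1)] sub by blast
    hence "{i, pm i} = {i, pn i}" using pn_uniq[OF ij(1)] by simp
    thus "e \<in> M" using ee pm_M[OF ij(1)] by simp
  qed
  thus False using sub ne by blast
qed

lemma circ:
  assumes MN: "M \<noteq> N"
    and sep: "\<And>a b. a \<in> VD \<Longrightarrow> b \<in> VD \<Longrightarrow> blA a \<inter> blB b = {} \<Longrightarrow> \<exists>p<n. p \<notin> blA a \<union> blB b"
  shows "circuit n d"
proof -
  obtain e0 where e0: "e0 \<in> M" "e0 \<notin> N" using M_minus_N[OF MN] by blast
  have "d e0 \<noteq> 0" using e0 unfolding d_def chi_def by simp
  hence dnz: "d \<noteq> (\<lambda>_. 0)" by (metis)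
  have "\<not> (\<exists>y \<in> RE n. y \<noteq> (\<lambda>_. 0) \<and> kerA n y \<and> suppB n y \<subset> suppB n d)"
  proof
    assume "\<exists>y \<in> RE n. y \<noteq> (\<lambda>_. 0) \<and> kerA n y \<and> suppB n y \<subset> suppB n d"
    then obtain y where y: "y \<in> RE n" "y \<noteq> (\<lambda>_. 0)" "kerA n y" "suppB n y \<subset> suppB n d" by blast
    have ys: "chi N e \<noteq> chi M e" if "y e \<noteq> 0" for e
    proof (cases "e \<in> Kedges n")
      case True
      hence "Inr e \<in> suppB n y" using that unfolding suppB_def by auto
      hence "Inr e \<in> suppB n d" using y(4) by blast
      hence "d e \<noteq> 0" unfolding suppB_def by auto
      thus ?thesis unfolding d_def by simp
    next
      case False thus ?thesis using y(1) that unfolding RE_def by auto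
    qed
    have yo: "xsum y (cut n S) = 0" if "odd_set n S" "xsum d (cut n S) = 0" for S
    proof (rule ccontr)
      assume "xsum y (cut n S) \<noteq> 0"
      hence "Inl S \<in> suppB n y" using that unfolding suppB_def by auto
      hence "Inl S \<in> suppB n d" using y(4) by blast
      thus False using that unfolding suppB_def by auto
    qed
    obtain c where c: "\<And>e. y e = c * d e" using key[OF y(3) ys yo sep] by blast
    have "c \<noteq> 0" using y(2) c by auto
    have "xsum y F = c * xsum d F" for F unfolding xsum_def c by (simp add: sum_distrib_left)
    hence "suppB n y = suppB n d" unfolding suppB_def using c \<open>c \<noteq> 0\<close> by auto
    thus False using y(4) by simp
  qed
  thus ?thesis unfolding circuit_def using d_RE dnz d_kerA by blast
qed

end

lemma finite_PM: "finite {M. perfect_matching n M}"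
proof -
  have "{M. perfect_matching n M} \<subseteq> Pow (Kedges n)" unfolding perfect_matching_def by auto
  moreover have "finite (Pow (Kedges n))" using Kedges_fin by simp
  ultimately show ?thesis by (rule finite_subset)
qed

lemma finite_X: "finite (chi ` {M. perfect_matching n M})" using finite_PM by simp

lemma chi_in_P: "perfect_matching n M \<Longrightarrow> chi M \<in> P_perfmatch n"
  unfolding P_perfmatch_def conv_def
proof (intro CollectI exI[of _ "\<lambda>y. if y = chi M then 1 else 0"] conjI)
  assume M: "perfect_matching n M"
  let ?X = "chi ` {M. perfect_matching n M}"
  have mem: "chi M \<in> ?X" using M by simp
  show "\<forall>y\<in>?X. 0 \<le> (if y = chi M then 1 else 0 :: real)" by simp
  show "(\<Sum>y\<in>?X. if y = chi M then 1 else 0 :: real) = 1" using finite_X[of n] mem by simp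
  show "chi M = (\<lambda>e. \<Sum>y\<in>?X. (if y = chi M then 1 else 0) * y e)"
  proof
    fix e
    have "(\<Sum>y\<in>?X. (if y = chi M then 1 else 0) * y e) = (\<Sum>y\<in>?X. if y = chi M then y e else 0)"
      by (rule sum.cong) auto
    also have "\<dots> = chi M e" using finite_X[of n] mem by simp
    finally show "chi M e = (\<Sum>y\<in>?X. (if y = chi M then 1 else 0) * y e)" by simp
  qed
qed

lemma P_elim:
  assumes "x \<in> P_perfmatch n"
  obtains u where "\<forall>y\<in>chi ` {M. perfect_matching n M}. u y \<ge> 0"
    "sum u (chi ` {M. perfect_matching n M}) = 1"
    "x = (\<lambda>e. \<Sum>y\<in>chi ` {M. perfect_matching n M}. u y * y e)"
  using assms unfolding P_perfmatch_def conv_def by blast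

lemma P_nonneg: "x \<in> P_perfmatch n \<Longrightarrow> x e \<ge> 0"
proof -
  assume "x \<in> P_perfmatch n"
  then obtain u where u: "\<forall>y\<in>chi ` {M. perfect_matching n M}. u y \<ge> 0"
    "x = (\<lambda>e. \<Sum>y\<in>chi ` {M. perfect_matching n M}. u y * y e)" by (rule P_elim)
  have "\<forall>y\<in>chi ` {M. perfect_matching n M}. u y * y e \<ge> 0" using u(1) unfolding chi_def by auto
  hence "(\<Sum>y\<in>chi ` {M. perfect_matching n M}. u y * y e) \<ge> 0" by (intro sum_nonneg) blast
  thus ?thesis using u(2) by simp
qed

lemma P_deg: "x \<in> P_perfmatch n \<Longrightarrow> v < n \<Longrightarrow> xsum x (cut n {v}) = 1"
proof -
  assume x: "x \<in> P_perfmatch n" and v: "v < n"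
  let ?X = "chi ` {M. perfect_matching n M}"
  obtain u where u: "\<forall>y\<in>?X. u y \<ge> 0" "sum u ?X = 1"
    "x = (\<lambda>e. \<Sum>y\<in>?X. u y * y e)" using x by (rule P_elim)
  have "xsum x (cut n {v}) = (\<Sum>e\<in>cut n {v}. \<Sum>y\<in>?X. u y * y e)" unfolding xsum_def u(3) ..
  also have "\<dots> = (\<Sum>y\<in>?X. \<Sum>e\<in>cut n {v}. u y * y e)" by (rule sum.swap)
  also have "\<dots> = (\<Sum>y\<in>?X. u y * xsum y (cut n {v}))" unfolding xsum_def by (simp add: sum_distrib_left)
  also have "\<dots> = (\<Sum>y\<in>?X. u y)"
  proof (rule sum.cong[OF refl])
    fix y assume "y \<in> ?X"
    then obtain M where "perfect_matching n M" "y = chi M" by blast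
    thus "u y * xsum y (cut n {v}) = u y" using chi_cut_single[OF _ v] by simp
  qed
  finally show ?thesis using u(2) by simp
qed

lemma P_eq_chi:
  assumes M: "perfect_matching n M" and a: "a \<in> P_perfmatch n" and z: "\<And>e. e \<notin> M \<Longrightarrow> a e = 0"
  shows "a = chi M"
proof
  fix e
  show "a e = chi M e"
  proof (cases "e \<in> M")
    case False thus ?thesis using z unfolding chi_def by simp
  next
    case True
    from True pm_sub[OF M] obtain i j where ij: "i < n" "e = {i,j}" unfolding Kedges_def by blast
    have ee: "e = {i, partner M i}" using partner(4)[OF M ij(1) True] ij by simp
    have "1 = xsum a (cut n {i})" using P_deg[OF a ij(1)] by simp
    also have "\<dots> = (\<Sum>e'\<in>{e'\<in>Kedges n. i \<in> e'}. a e')" unfolding xsum_def cut_single ..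
    also have "\<dots> = (\<Sum>e'\<in>{e}. a e')"
    proof (rule sum.mono_neutral_right)
      show "finite {e' \<in> Kedges n. i \<in> e'}" using Kedges_fin by simp
      show "{e} \<subseteq> {e' \<in> Kedges n. i \<in> e'}" using True pm_sub[OF M] ij by auto
      show "\<forall>e'\<in>{e' \<in> Kedges n. i \<in> e'} - {e}. a e' = 0"
      proof
        fix e' assume e': "e' \<in> {e' \<in> Kedges n. i \<in> e'} - {e}"
        have "e' \<notin> M"
        proof
          assume "e' \<in> M" hence "e' = {i, partner M i}" using partner(4)[OF M ij(1)] e' by simp
          thus False using e' ee by simp
        qed
        thus "a e' = 0" by (rule z)
      qed
    qed
    finally show ?thesis using True unfolding chi_def by simp
  qed
qed

lemma chi_vertex: "perfect_matching n M \<Longrightarrow> vertex_of (chi M) (P_perfmatch n)"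
  unfolding vertex_of_def
proof (intro conjI notI)
  assume M: "perfect_matching n M"
  show "chi M \<in> P_perfmatch n" using chi_in_P[OF M] .
  assume "\<exists>a\<in>P_perfmatch n. \<exists>b\<in>P_perfmatch n. a \<noteq> b \<and> (\<exists>t. 0 < t \<and> t < 1 \<and> chi M = (\<lambda>e. (1 - t) * a e + t * b e))"
  then obtain a b t where ab: "a \<in> P_perfmatch n" "b \<in> P_perfmatch n" "a \<noteq> b" "0 < t" "t < 1"
    "chi M = (\<lambda>e. (1 - t) * a e + t * b e)" by blast
  have z: "a e = 0 \<and> b e = 0" if "e \<notin> M" for e
  proof -
    have "0 = (1 - t) * a e + t * b e" using ab(6) that unfolding chi_def by (metis)
    moreover have "a e \<ge> 0" "b e \<ge> 0" using P_nonneg ab(1,2) by auto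
    ultimately show ?thesis using ab(4,5)
      by (smt (verit) mult_nonneg_nonneg mult_pos_pos)
  qed
  have "a = chi M" using P_eq_chi[OF M ab(1)] z by blast
  moreover have "b = chi M" using P_eq_chi[OF M ab(2)] z by blast
  ultimately show False using ab(3) by simp
qed


lemma vertex_chi:
  assumes vx: "vertex_of x (P_perfmatch n)"
  shows "\<exists>M. perfect_matching n M \<and> x = chi M"
proof -
  let ?X = "chi ` {M. perfect_matching n M}"
  have fX: "finite ?X" by (rule finite_X)
  have xP: "x \<in> P_perfmatch n" using vx unfolding vertex_of_def by simp
  obtain u where u: "\<forall>y\<in>?X. u y \<ge> 0" "sum u ?X = 1"
    "x = (\<lambda>e. \<Sum>y\<in>?X. u y * y e)" using xP by (rule P_elim)
  obtain y0 where y0: "y0 \<in> ?X" "u y0 > 0"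
  proof (rule ccontr)
    assume "\<not> thesis"
    hence "\<forall>y\<in>?X. u y = 0" using that u(1) by force
    hence "sum u ?X = 0" by (intro sum.neutral) blast
    thus False using u(2) by simp
  qed
  obtain M0 where M0: "perfect_matching n M0" "y0 = chi M0" using y0(1) by blast
  have y0P: "y0 \<in> P_perfmatch n" using chi_in_P[OF M0(1)] M0(2) by simp
  define t where "t = u y0"
  have sr: "sum u ?X = t + sum u (?X - {y0})" unfolding t_def using sum.remove[OF fX y0(1)] .
  have nn: "sum u (?X - {y0}) \<ge> 0" using u(1) by (intro sum_nonneg) auto
  have xe: "x e = t * y0 e + (\<Sum>y\<in>?X - {y0}. u y * y e)" for e
    unfolding u(3) t_def using sum.remove[OF fX y0(1), of "\<lambda>y. u y * y e"] by simp
  have "x = y0"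
  proof (cases "t = 1")
    case True
    hence "sum u (?X - {y0}) = 0" using sr u(2) by simp
    hence z: "\<forall>y\<in>?X - {y0}. u y = 0" using sum_nonneg_eq_0_iff[of "?X - {y0}" u] fX u(1) by auto
    show ?thesis
    proof
      fix e
      have "(\<Sum>y\<in>?X - {y0}. u y * y e) = 0" using z by simp
      thus "x e = y0 e" using xe True by simp
    qed
  next
    case False
    have t1: "t < 1" using False sr u(2) nn by simp
    have t0: "0 < t" using y0(2) unfolding t_def .
    define u' where "u' y = (if y = y0 then 0 else u y / (1 - t))" for y
    define a where "a = (\<lambda>e. \<Sum>y\<in>?X. u' y * y e)"
    have aP: "a \<in> P_perfmatch n" unfolding P_perfmatch_def conv_def
    proof (intro CollectI exI[of _ u'] conjI)
      show "\<forall>y\<in>?X. 0 \<le> u' y" using u(1) t1 unfolding u'_def by auto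
      have "sum u' ?X = u' y0 + sum u' (?X - {y0})" using sum.remove[OF fX y0(1)] .
      also have "\<dots> = (\<Sum>y\<in>?X - {y0}. u y / (1 - t))" unfolding u'_def by simp
      also have "\<dots> = sum u (?X - {y0}) / (1 - t)" by (simp add: sum_divide_distrib)
      also have "\<dots> = 1" using sr u(2) t1 by simp
      finally show "sum u' ?X = 1" .
      show "a = (\<lambda>e. \<Sum>y\<in>?X. u' y * y e)" unfolding a_def ..
    qed
    have ae: "(1 - t) * a e = (\<Sum>y\<in>?X - {y0}. u y * y e)" for e
    proof -
      have "a e = u' y0 * y0 e + (\<Sum>y\<in>?X - {y0}. u' y * y e)"
        unfolding a_def using sum.remove[OF fX y0(1), of "\<lambda>y. u' y * y e"] by simp
      also have "\<dots> = (\<Sum>y\<in>?X - {y0}. (u y * y e) / (1 - t))"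
        unfolding u'_def by simp
      also have "\<dots> = (\<Sum>y\<in>?X - {y0}. u y * y e) / (1 - t)" by (simp add: sum_divide_distrib)
      finally show ?thesis using t1 by simp
    qed
    have xcomb: "x = (\<lambda>e. (1 - t) * a e + t * y0 e)"
    proof
      fix e show "x e = (1 - t) * a e + t * y0 e" using xe ae by simp
    qed
    have "a = y0"
    proof (rule ccontr)
      assume "a \<noteq> y0"
      hence "\<exists>a'\<in>P_perfmatch n. \<exists>b\<in>P_perfmatch n. a' \<noteq> b \<and> (\<exists>t::real. 0 < t \<and> t < 1 \<and> x = (\<lambda>e. (1 - t) * a' e + t * b e))"
        using aP y0P t0 t1 xcomb by blast
      thus False using vx unfolding vertex_of_def by blast
    qed
    thus ?thesis using xcomb by (auto simp: algebra_simps)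
  qed
  thus ?thesis using M0 by blast
qed

lemma vertex_iff: "vertex_of x (P_perfmatch n) \<longleftrightarrow> (\<exists>M. perfect_matching n M \<and> x = chi M)"
  using vertex_chi chi_vertex by blast

lemma chi_inj: "chi M = chi N \<Longrightarrow> M = N"
proof -
  assume h: "chi M = chi N"
  have "e \<in> M \<longleftrightarrow> e \<in> N" for e using fun_cong[OF h, of e] unfolding chi_def by (auto split: if_splits)
  thus "M = N" by blast
qed

lemma walk0: "x \<in> P \<Longrightarrow> circuit_walk n P x x 0"
  unfolding circuit_walk_def by (intro exI[of _ "\<lambda>_. x"]) simp

lemma walk0_eq: "circuit_walk n P x y 0 \<Longrightarrow> x = y"
  unfolding circuit_walk_def by auto

lemma walk1: "circuit_step n P x y \<Longrightarrow> y \<in> P \<Longrightarrow> circuit_walk n P x y 1"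
  unfolding circuit_walk_def
proof (intro exI[of _ "\<lambda>i. if i = 0 then x else y"] conjI)
  assume s: "circuit_step n P x y" and y: "y \<in> P"
  have x: "x \<in> P" using s unfolding circuit_step_def by simp
  show "\<forall>i\<le>1. (if i = 0 then x else y) \<in> P" using x y by auto
  show "\<forall>i<1. circuit_step n P (if i = 0 then x else y) (if Suc i = 0 then x else y)" using s by simp
qed simp_all

lemma walk1_step: "circuit_walk n P x y 1 \<Longrightarrow> circuit_step n P x y"
  unfolding circuit_walk_def by auto

lemma walk2: "circuit_step n P x y \<Longrightarrow> circuit_step n P y z \<Longrightarrow> z \<in> P \<Longrightarrow> circuit_walk n P x z 2"
  unfolding circuit_walk_def
proof (intro exI[of _ "\<lambda>i. if i = 0 then x else if i = 1 then y else z"] conjI)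
  assume s1: "circuit_step n P x y" and s2: "circuit_step n P y z" and z: "z \<in> P"
  have x: "x \<in> P" using s1 unfolding circuit_step_def by simp
  have y: "y \<in> P" using s2 unfolding circuit_step_def by simp
  show "\<forall>i\<le>2. (if i = 0 then x else if i = 1 then y else z) \<in> P" using x y z by auto
  show "\<forall>i<2. circuit_step n P (if i = 0 then x else if i = 1 then y else z)
          (if Suc i = 0 then x else if Suc i = 1 then y else z)"
  proof (intro allI impI)
    fix i :: nat assume "i < 2"
    hence "i = 0 \<or> i = 1" by auto
    thus "circuit_step n P (if i = 0 then x else if i = 1 then y else z)
          (if Suc i = 0 then x else if Suc i = 1 then y else z)" using s1 s2 by auto
  qed
qed simp_all

lemma dist_le: "circuit_walk n P x y l \<Longrightarrow> circuit_distance n P x y \<le> l"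
  unfolding circuit_distance_def by (rule Least_le)

lemma dist_0: "x \<in> P \<Longrightarrow> circuit_distance n P x x = 0"
  using dist_le[OF walk0] by fastforce

lemma dist_ge1: "x \<noteq> y \<Longrightarrow> circuit_walk n P x y l \<Longrightarrow> circuit_distance n P x y \<ge> 1"
  unfolding circuit_distance_def
proof -
  assume xy: "x \<noteq> y" and w: "circuit_walk n P x y l"
  have "circuit_walk n P x y (LEAST l. circuit_walk n P x y l)" using w by (rule LeastI)
  hence "(LEAST l. circuit_walk n P x y l) \<noteq> 0" using walk0_eq xy by metis
  thus "1 \<le> (LEAST l. circuit_walk n P x y l)" by simp
qed

context TPM begin

lemma step:
  assumes MN: "M \<noteq> N" and c: "circuit n d"
  shows "circuit_step n (P_perfmatch n) (chi M) (chi N)"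
  unfolding circuit_step_def
proof (intro conjI exI[of _ d] exI[of _ "1::real"])
  show "chi M \<in> P_perfmatch n" using chi_in_P[OF PM] .
  show "circuit n d" by fact
  show "(0::real) < 1" by simp
  show "chi N = (\<lambda>e. chi M e + 1 * d e)" unfolding d_def by simp
  show "chi N \<in> P_perfmatch n" using chi_in_P[OF PN] .
  obtain e0 where e0: "e0 \<in> M" "e0 \<notin> N" using M_minus_N[OF MN] by blast
  show "\<forall>\<beta>>1. (\<lambda>e. chi M e + \<beta> * d e) \<notin> P_perfmatch n"
  proof (intro allI impI notI)
    fix \<beta> :: real assume b: "\<beta> > 1" and P: "(\<lambda>e. chi M e + \<beta> * d e) \<in> P_perfmatch n"
    have "chi M e0 + \<beta> * d e0 \<ge> 0" using P_nonneg[OF P, of e0] by simp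
    thus False using e0 b unfolding d_def chi_def by simp
  qed
qed

end


lemma suppB_scale: "k \<noteq> 0 \<Longrightarrow> suppB n (\<lambda>e. k * z e) = suppB n z"
proof -
  assume k: "k \<noteq> 0"
  have "xsum (\<lambda>e. k * z e) F = k * xsum z F" for F unfolding xsum_def by (simp add: sum_distrib_left)
  thus ?thesis unfolding suppB_def using k by auto
qed

lemma circuit_scale:
  assumes c: "circuit n z" and k: "k \<noteq> 0"
  shows "circuit n (\<lambda>e. k * z e)"
proof -
  have xs: "xsum (\<lambda>e. k * z e) F = k * xsum z F" for F unfolding xsum_def by (simp add: sum_distrib_left)
  have RE: "(\<lambda>e. k * z e) \<in> RE n" using c unfolding circuit_def RE_def by auto
  have nz: "(\<lambda>e. k * z e) \<noteq> (\<lambda>_. 0)"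
  proof
    assume "(\<lambda>e. k * z e) = (\<lambda>_. 0)"
    hence "z = (\<lambda>_. 0)" using k by (auto simp: fun_eq_iff)
    thus False using c unfolding circuit_def by simp
  qed
  have kA: "kerA n (\<lambda>e. k * z e)" using c xs unfolding circuit_def kerA_def by simp
  show ?thesis using c RE nz kA unfolding circuit_def suppB_scale[OF k] by blast
qed

lemma cyc4:
  fixes z :: "nat set \<Rightarrow> real"
  assumes dist: "distinct [c0, c1, c2, c3]" and lt: "c0 < n" "c1 < n" "c2 < n" "c3 < n"
    and zo: "\<And>e. e \<notin> {{c0,c1},{c1,c2},{c2,c3},{c3,c0}} \<Longrightarrow> z e = 0"
    and zv: "z {c0,c1} = s" "z {c1,c2} = -s" "z {c2,c3} = s" "z {c3,c0} = -s"
    and od: "odd (card (S \<inter> {c0,c1,c2,c3}))"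
  shows "(\<Sum>e\<in>{e\<in>Kedges n. e \<subseteq> S}. z e) = 0"
proof -
  define EC where "EC = {{c0,c1},{c1,c2},{c2,c3},{c3,c0}}"
  have ECK: "EC \<subseteq> Kedges n" unfolding EC_def using dist lt by (auto simp: Kedges_mem)
  have "(\<Sum>e\<in>{e\<in>Kedges n. e \<subseteq> S}. z e) = (\<Sum>e\<in>{e\<in>EC. e \<subseteq> S}. z e)"
  proof (rule sum.mono_neutral_right)
    show "finite {e\<in>Kedges n. e \<subseteq> S}" using Kedges_fin by simp
    show "{e\<in>EC. e \<subseteq> S} \<subseteq> {e\<in>Kedges n. e \<subseteq> S}" using ECK by auto
    show "\<forall>e\<in>{e\<in>Kedges n. e \<subseteq> S} - {e\<in>EC. e \<subseteq> S}. z e = 0" using zo unfolding EC_def by auto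
  qed
  also have "\<dots> = (\<Sum>e\<in>EC. if e \<subseteq> S then z e else 0)"
    by (rule sum.inter_filter) (simp add: EC_def)
  also have "\<dots> = (if {c0,c1} \<subseteq> S then s else 0) + (if {c1,c2} \<subseteq> S then -s else 0)
      + (if {c2,c3} \<subseteq> S then s else 0) + (if {c3,c0} \<subseteq> S then -s else 0)"
    unfolding EC_def using dist zv by (auto simp: doubleton_eq_iff)
  also have "\<dots> = 0"
    using od dist
    by (cases "c0 \<in> S"; cases "c1 \<in> S"; cases "c2 \<in> S"; cases "c3 \<in> S"; simp add: Int_insert_right)
  finally show ?thesis .
qed

context TPM begin

lemma VD_fin: "finite VD" unfolding VD_def by simp
lemma VD_sub: "VD \<subseteq> {..<n}" unfolding VD_def by auto

lemma blocks_card: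
  assumes a: "a \<in> VD" and b: "b \<in> VD" and dj: "blA a \<inter> blB b = {}"
  shows "card (blA a \<union> blB b) = 8" "blA a \<union> blB b \<subseteq> VD"
proof -
  have f: "finite (blA a)" "finite (blB b)" unfolding blA_def blB_def by simp_all
  show "card (blA a \<union> blB b) = 8" using card_Un_disjoint[OF f dj] blA_facts(2)[OF a] blB_facts(2)[OF b] by simp
  show "blA a \<union> blB b \<subseteq> VD" using blA_facts(1)[OF a] blB_facts(1)[OF b] by simp
qed

lemma sep_small:
  assumes "card VD < 8" "a \<in> VD" "b \<in> VD" "blA a \<inter> blB b = {}"
  shows "\<exists>p<n. p \<notin> blA a \<union> blB b"
proof -
  have "card (blA a \<union> blB b) \<le> card VD" using blocks_card[OF assms(2-4)] VD_fin by (intro card_mono) auto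
  thus ?thesis using blocks_card[OF assms(2-4)] assms(1) by simp
qed

lemma sep_n:
  assumes "n \<noteq> 8" "a \<in> VD" "b \<in> VD" "blA a \<inter> blB b = {}"
  shows "\<exists>p<n. p \<notin> blA a \<union> blB b"
proof (rule ccontr)
  assume "\<not> (\<exists>p<n. p \<notin> blA a \<union> blB b)"
  hence sub: "{..<n} \<subseteq> blA a \<union> blB b" by auto
  have sub2: "blA a \<union> blB b \<subseteq> {..<n}" using blocks_card(2)[OF assms(2-4)] VD_sub by blast
  have "card {..<n} = 8" using sub sub2 blocks_card(1)[OF assms(2-4)] by (metis subset_antisym)
  thus False using assms(1) by simp
qed

end


locale COV = TPM +
  fixes a b :: nat
  assumes a: "a \<in> VD" and b: "b \<in> VD" and dj: "blA a \<inter> blB b = {}"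
    and cov: "{..<n} \<subseteq> blA a \<union> blB b"
begin

lemma an: "a < n" using VD_lt[OF a] .
lemma bn: "b < n" using VD_lt[OF b] .
lemma a1V: "pm a \<in> VD" using VD_pm[OF a] .
lemma a2V: "pn a \<in> VD" using VD_pn[OF a] .
lemma a3V: "pn (pm a) \<in> VD" using VD_pn[OF a1V] .
lemma b1V: "pn b \<in> VD" using VD_pn[OF b] .
lemma b2V: "pm b \<in> VD" using VD_pm[OF b] .
lemma b3V: "pm (pn b) \<in> VD" using VD_pm[OF b1V] .
lemma djx: "x \<in> blA a \<Longrightarrow> x \<in> blB b \<Longrightarrow> False" using dj by blast

lemma B_pm: "x \<in> blB b \<Longrightarrow> pm x \<in> blB b"
  unfolding blB_def using pm_pm[OF bn] pm_pm[OF VD_lt[OF b1V]] by auto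
lemma A_pn: "x \<in> blA a \<Longrightarrow> pn x \<in> blA a"
  unfolding blA_def using pn_pn[OF an] pn_pn[OF VD_lt[OF a1V]] by auto

lemma closA: "pm (pn (pm a)) = pn a"
proof -
  define x where "x = pm (pn (pm a))"
  have a3n: "pn (pm a) < n" using VD_lt[OF a3V] .
  have xn: "x < n" unfolding x_def using pm_lt[OF a3n] .
  have px: "pm x = pn (pm a)" unfolding x_def using pm_pm[OF a3n] .
  have "x \<in> blA a \<or> x \<in> blB b" using cov xn by auto
  thus ?thesis
  proof
    assume "x \<in> blB b"
    hence "pm x \<in> blB b" by (rule B_pm)
    moreover have "pm x \<in> blA a" unfolding px blA_def by simp
    ultimately show ?thesis using djx by blast
  next
    assume "x \<in> blA a"
    hence "x = pn a \<or> x = a \<or> x = pm a \<or> x = pn (pm a)" unfolding blA_def by simp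
    thus ?thesis
    proof (elim disjE)
      assume "x = pn a" thus ?thesis unfolding x_def .
    next
      assume "x = a" hence "pm x = pm a" by simp
      thus ?thesis using px blA_facts(8)[OF a] by simp
    next
      assume "x = pm a" hence "pm x = a" using pm_pm[OF an] by simp
      thus ?thesis using px blA_facts(7)[OF a] by simp
    next
      assume "x = pn (pm a)" thus ?thesis using px pm_ne[OF xn] by simp
    qed
  qed
qed

lemma closB: "pn (pm b) = pm (pn b)"
proof -
  define x where "x = pn (pm b)"
  have b2n: "pm b < n" using VD_lt[OF b2V] .
  have xn: "x < n" unfolding x_def using pn_lt[OF b2n] .
  have px: "pn x = pm b" unfolding x_def using pn_pn[OF b2n] .
  have "x \<in> blA a \<or> x \<in> blB b" using cov xn by auto
  thus ?thesis
  proof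
    assume "x \<in> blA a"
    hence "pn x \<in> blA a" by (rule A_pn)
    moreover have "pn x \<in> blB b" unfolding px blB_def by simp
    ultimately show ?thesis using djx by blast
  next
    assume "x \<in> blB b"
    hence "x = pm b \<or> x = b \<or> x = pn b \<or> x = pm (pn b)" unfolding blB_def by simp
    thus ?thesis
    proof (elim disjE)
      assume "x = pm b" thus ?thesis using px pn_ne[OF xn] by simp
    next
      assume "x = b" hence "pn x = pn b" by simp
      thus ?thesis using px blB_facts(5)[OF b] by simp
    next
      assume "x = pn b" hence "pn x = b" using pn_pn[OF bn] by simp
      thus ?thesis using px blB_facts(3)[OF b] by simp
    next
      assume "x = pm (pn b)" thus ?thesis unfolding x_def .
    qed
  qed
qed

lemma closA': "pm (pn a) = pn (pm a)"
proof -
  have "pm (pm (pn (pm a))) = pm (pn a)" using closA by simp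
  thus ?thesis using pm_pm[OF VD_lt[OF a3V]] by simp
qed

lemma closB': "pn (pm (pn b)) = pm b"
proof -
  have "pn (pn (pm b)) = pn (pm (pn b))" using closB by simp
  thus ?thesis using pn_pn[OF VD_lt[OF b2V]] by simp
qed

lemma A_pm: "x \<in> blA a \<Longrightarrow> pm x \<in> blA a"
  unfolding blA_def using pm_pm[OF an] closA closA' by auto
lemma B_pn: "x \<in> blB b \<Longrightarrow> pn x \<in> blB b"
  unfolding blB_def using pn_pn[OF bn] closB closB' by auto

lemma AB_lt: "x \<in> blA a \<union> blB b \<Longrightarrow> x < n"
  using blocks_card(2)[OF a b dj] VD_lt by blast

lemma dsplit:
  assumes "chi N e \<noteq> chi M e"
  shows "(e \<subseteq> blA a \<and> e \<inter> blB b = {}) \<or> (e \<subseteq> blB b \<and> e \<inter> blA a = {})"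
proof -
  have "e \<in> M \<or> e \<in> N" using assms unfolding chi_def by (auto split: if_splits)
  hence "e \<in> Kedges n" using M_K N_K by blast
  then obtain i j where ij: "i < n" "j < n" "i \<noteq> j" "e = {i,j}" unfolding Kedges_def by blast
  have "e = {i, pm i} \<or> e = {i, pn i}"
    using \<open>e \<in> M \<or> e \<in> N\<close> pm_uniq[OF ij(1)] pn_uniq[OF ij(1)] ij(4) by blast
  moreover have "i \<in> blA a \<or> i \<in> blB b" using cov ij(1) by auto
  ultimately show ?thesis using A_pm A_pn B_pm B_pn djx by blast
qed


end

context COV begin

definition L where "L = {e \<in> N. e \<subseteq> blA a} \<union> {e \<in> M. e \<subseteq> blB b}"

lemma L_A: "v \<in> blA a \<Longrightarrow> {e \<in> L. v \<in> e} = {{v, pn v}}"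
proof -
  assume v: "v \<in> blA a"
  have vn: "v < n" using AB_lt v by blast
  show ?thesis
  proof
    show "{e \<in> L. v \<in> e} \<subseteq> {{v, pn v}}"
    proof
      fix e assume e: "e \<in> {e \<in> L. v \<in> e}"
      hence "(e \<in> N \<and> e \<subseteq> blA a) \<or> (e \<in> M \<and> e \<subseteq> blB b)" "v \<in> e" unfolding L_def by auto
      thus "e \<in> {{v, pn v}}" using pn_uniq[OF vn] djx v by blast
    qed
    show "{{v, pn v}} \<subseteq> {e \<in> L. v \<in> e}" using pn_N[OF vn] A_pn[OF v] v unfolding L_def by auto
  qed
qed

lemma L_B: "v \<in> blB b \<Longrightarrow> {e \<in> L. v \<in> e} = {{v, pm v}}"
proof -
  assume v: "v \<in> blB b"
  have vn: "v < n" using AB_lt v by blast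
  show ?thesis
  proof
    show "{e \<in> L. v \<in> e} \<subseteq> {{v, pm v}}"
    proof
      fix e assume e: "e \<in> {e \<in> L. v \<in> e}"
      hence "(e \<in> N \<and> e \<subseteq> blA a) \<or> (e \<in> M \<and> e \<subseteq> blB b)" "v \<in> e" unfolding L_def by auto
      thus "e \<in> {{v, pm v}}" using pm_uniq[OF vn] djx v by blast
    qed
    show "{{v, pm v}} \<subseteq> {e \<in> L. v \<in> e}" using pm_M[OF vn] B_pm[OF v] v unfolding L_def by auto
  qed
qed

lemma PL: "perfect_matching n L"
  unfolding perfect_matching_def
proof
  show "L \<subseteq> Kedges n" unfolding L_def using M_K N_K by auto
  show "\<forall>v<n. card {e \<in> L. v \<in> e} = 1"
  proof (intro allI impI)
    fix v assume "v < n"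
    hence "v \<in> blA a \<or> v \<in> blB b" using cov by auto
    thus "card {e \<in> L. v \<in> e} = 1" using L_A L_B by auto
  qed
qed

lemma pL_A: "v \<in> blA a \<Longrightarrow> partner L v = pn v"
proof -
  assume v: "v \<in> blA a"
  have "{v, pn v} \<in> L" using L_A[OF v] by auto
  thus ?thesis using partner_eq[OF PL] AB_lt v by blast
qed

lemma pL_B: "v \<in> blB b \<Longrightarrow> partner L v = pm v"
proof -
  assume v: "v \<in> blB b"
  have "{v, pm v} \<in> L" using L_B[OF v] by auto
  thus ?thesis using partner_eq[OF PL] AB_lt v by blast
qed

lemma two_walk: "circuit_walk n (P_perfmatch n) (chi M) (chi N) 2"
proof -
  interpret T1: TPM n M L using PM PL by unfold_locales
  interpret T2: TPM n L N using PL PN by unfold_locales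
  have aA: "a \<in> blA a" unfolding blA_def by simp
  have bB: "b \<in> blB b" unfolding blB_def by simp
  have hML: "M \<noteq> L"
  proof
    assume "M = L"
    hence "{a, pn a} \<in> M" using L_A[OF aA] by auto
    thus False using VD_pnM[OF a] by simp
  qed
  have hLN: "L \<noteq> N"
  proof
    assume "L = N"
    hence "{b, pm b} \<in> N" using L_B[OF bB] by auto
    thus False using VD_pmN[OF b] by simp
  qed
  have cA: "card (blA a) = 4" using blA_facts(2)[OF a] .
  have cB: "card (blB b) = 4" using blB_facts(2)[OF b] .
  have V1: "T1.VD \<subseteq> blA a"
  proof
    fix v assume v: "v \<in> T1.VD"
    hence vn: "v < n" and ne: "pm v \<noteq> partner L v" unfolding T1.VD_def by auto
    show "v \<in> blA a"
    proof (rule ccontr)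
      assume "v \<notin> blA a"
      hence "v \<in> blB b" using cov vn by auto
      thus False using pL_B ne by simp
    qed
  qed
  have V2: "T2.VD \<subseteq> blB b"
  proof
    fix v assume v: "v \<in> T2.VD"
    hence vn: "v < n" and ne: "partner L v \<noteq> pn v" unfolding T2.VD_def by auto
    show "v \<in> blB b"
    proof (rule ccontr)
      assume "v \<notin> blB b"
      hence "v \<in> blA a" using cov vn by auto
      thus False using pL_A ne by simp
    qed
  qed
  have "card T1.VD \<le> 4" using card_mono[OF _ V1] cA unfolding blA_def by simp
  hence k1: "card T1.VD < 8" by simp
  have c1: "circuit n T1.d"
  proof (rule T1.circ[OF hML])
    fix x y assume "x \<in> T1.VD" "y \<in> T1.VD" "T1.blA x \<inter> T1.blB y = {}"
    thus "\<exists>p<n. p \<notin> T1.blA x \<union> T1.blB y" by (rule T1.sep_small[OF k1])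
  qed
  have "card T2.VD \<le> 4" using card_mono[OF _ V2] cB unfolding blB_def by simp
  hence k2: "card T2.VD < 8" by simp
  have c2: "circuit n T2.d"
  proof (rule T2.circ[OF hLN])
    fix x y assume "x \<in> T2.VD" "y \<in> T2.VD" "T2.blA x \<inter> T2.blB y = {}"
    thus "\<exists>p<n. p \<notin> T2.blA x \<union> T2.blB y" by (rule T2.sep_small[OF k2])
  qed
  show ?thesis using walk2[OF T1.step[OF hML c1] T2.step[OF hLN c2] chi_in_P[OF PN]] .
qed


lemma chi_ne_nonempty: "chi N e \<noteq> chi M e \<Longrightarrow> e \<noteq> {}"
proof -
  assume "chi N e \<noteq> chi M e"
  hence "e \<in> M \<or> e \<in> N" unfolding chi_def by (auto split: if_splits)
  hence "e \<in> Kedges n" using M_K N_K by blast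
  thus "e \<noteq> {}" unfolding Kedges_def by auto
qed

lemma XS:
  assumes zk: "kerA n z" and S: "S \<subseteq> {..<n}"
  shows "xsum z (cut n S) = -2 * (\<Sum>e\<in>{e\<in>Kedges n. e \<subseteq> S}. z e)"
proof -
  have fS: "finite S" using S finite_subset by blast
  have "(\<Sum>v\<in>S. xsum z (cut n {v})) = 0"
  proof (rule sum.neutral, rule ballI)
    fix v assume "v \<in> S" hence "v < n" using S by auto
    thus "xsum z (cut n {v}) = 0" using zk unfolding kerA_def by simp
  qed
  thus ?thesis using cut_decomp[OF fS, of z n] by simp
qed

lemma noncirc: "\<not> circuit n d"
proof
  assume c: "circuit n d"
  define A where "A = blA a"
  define B where "B = blB b"
  define y where "y e = (if e \<subseteq> A then d e else 0)" for e
  define yB where "yB e = (if e \<subseteq> B then d e else 0)" for e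
  have ds: "(e \<subseteq> A \<and> e \<inter> B = {}) \<or> (e \<subseteq> B \<and> e \<inter> A = {})" "e \<noteq> {}" if "d e \<noteq> 0" for e
    using dsplit[of e] chi_ne_nonempty[of e] that unfolding d_def A_def B_def by auto
  have dy: "d e = y e + yB e" for e
  proof (cases "d e = 0")
    case True thus ?thesis unfolding y_def yB_def by simp
  next
    case False
    from ds[OF False] show ?thesis unfolding y_def yB_def by auto
  qed
  have yRE: "y \<in> RE n" using d_RE unfolding RE_def y_def by auto
  have ykA: "kerA n y" unfolding kerA_def
  proof (intro allI impI)
    fix v assume vn: "v < n"
    show "xsum y (cut n {v}) = 0"
    proof (cases "v \<in> A")
      case True
      have "xsum y (cut n {v}) = xsum d (cut n {v})" unfolding xsum_def
      proof (rule sum.cong[OF refl])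
        fix e assume "e \<in> cut n {v}"
        hence ve: "v \<in> e" unfolding cut_single by simp
        show "y e = d e"
        proof (cases "d e = 0")
          case True thus ?thesis unfolding y_def by simp
        next
          case False thus ?thesis using ds[OF False] ve True unfolding y_def by auto
        qed
      qed
      thus ?thesis using d_kerA vn unfolding kerA_def by simp
    next
      case False
      have "xsum y (cut n {v}) = 0" unfolding xsum_def
      proof (rule sum.neutral, rule ballI)
        fix e assume "e \<in> cut n {v}"
        hence ve: "v \<in> e" unfolding cut_single by simp
        thus "y e = 0" using False unfolding y_def by auto
      qed
      thus ?thesis .
    qed
  qed
  have ybkA: "kerA n yB" unfolding kerA_def
  proof (intro allI impI)
    fix v assume vn: "v < n"
    have "xsum yB (cut n {v}) = xsum d (cut n {v}) - xsum y (cut n {v})"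
      unfolding xsum_def using dy by (simp add: sum_subtractf[symmetric] algebra_simps)
    thus "xsum yB (cut n {v}) = 0" using d_kerA ykA vn unfolding kerA_def by simp
  qed
  have an': "a < n" using an .
  have a1n: "pm a < n" using VD_lt[OF a1V] .
  have a3n: "pn (pm a) < n" using VD_lt[OF a3V] .
  have a2n: "pn a < n" using VD_lt[OF a2V] .
  have b1n: "pn b < n" using VD_lt[OF b1V] .
  have b2n: "pm b < n" using VD_lt[OF b2V] .
  have b3n: "pm (pn b) < n" using VD_lt[OF b3V] .
  note FA = blA_facts[OF a] and FB = blB_facts[OF b]
  have inA: "pn a \<in> A" "a \<in> A" "pm a \<in> A" "pn (pm a) \<in> A" unfolding A_def blA_def by simp_all
  have inB: "pm b \<in> B" "b \<in> B" "pn b \<in> B" "pm (pn b) \<in> B" unfolding B_def blB_def by simp_all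
  have eA: "e \<in> {{a, pm a}, {pm a, pn (pm a)}, {pn (pm a), pn a}, {pn a, a}}" if "y e \<noteq> 0" for e
  proof -
    have de: "d e \<noteq> 0" and eA: "e \<subseteq> A" using that unfolding y_def by (auto split: if_splits)
    hence "e \<in> M \<or> e \<in> N" unfolding d_def chi_def by (auto split: if_splits)
    hence "e \<in> Kedges n" using M_K N_K by blast
    then obtain i j where ij: "i < n" "e = {i,j}" unfolding Kedges_def by blast
    have iA: "i \<in> A" using eA ij by auto
    have "e = {i, pm i} \<or> e = {i, pn i}"
      using \<open>e \<in> M \<or> e \<in> N\<close> pm_uniq[OF ij(1)] pn_uniq[OF ij(1)] ij(2) by blast
    moreover have "i = pn a \<or> i = a \<or> i = pm a \<or> i = pn (pm a)" using iA unfolding A_def blA_def by simp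
    ultimately show ?thesis
      by (elim disjE; simp add: pm_pm[OF an'] pn_pn[OF an'] pn_pn[OF a1n] closA closA' insert_commute)
  qed
  have eB: "e \<in> {{b, pn b}, {pn b, pm (pn b)}, {pm (pn b), pm b}, {pm b, b}}" if "yB e \<noteq> 0" for e
  proof -
    have de: "d e \<noteq> 0" and eB: "e \<subseteq> B" using that unfolding yB_def by (auto split: if_splits)
    hence "e \<in> M \<or> e \<in> N" unfolding d_def chi_def by (auto split: if_splits)
    hence "e \<in> Kedges n" using M_K N_K by blast
    then obtain i j where ij: "i < n" "e = {i,j}" unfolding Kedges_def by blast
    have iB: "i \<in> B" using eB ij by auto
    have "e = {i, pm i} \<or> e = {i, pn i}"
      using \<open>e \<in> M \<or> e \<in> N\<close> pm_uniq[OF ij(1)] pn_uniq[OF ij(1)] ij(2) by blast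
    moreover have "i = pm b \<or> i = b \<or> i = pn b \<or> i = pm (pn b)" using iB unfolding B_def blB_def by simp
    ultimately show ?thesis
      by (elim disjE; simp add: pm_pm[OF bn] pn_pn[OF bn] pm_pm[OF b1n] closB closB' insert_commute)
  qed
  have yv: "y {a, pm a} = -1" "y {pm a, pn (pm a)} = 1" "y {pn (pm a), pn a} = -1" "y {pn a, a} = 1"
  proof -
    show "y {a, pm a} = -1" using inA pm_M[OF an'] VD_pmN[OF a] unfolding y_def d_def chi_def by simp
    show "y {pm a, pn (pm a)} = 1" using inA pn_N[OF a1n] VD_pnM[OF a1V] unfolding y_def d_def chi_def by simp
    show "y {pn (pm a), pn a} = -1" using inA pm_M[OF a3n] VD_pmN[OF a3V] closA unfolding y_def d_def chi_def by simp
    have "{pn a, a} = {a, pn a}" by (simp add: insert_commute)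
    thus "y {pn a, a} = 1" using inA pn_N[OF an'] VD_pnM[OF a] unfolding y_def d_def chi_def by simp
  qed
  have ybv: "yB {b, pn b} = 1" "yB {pn b, pm (pn b)} = -1" "yB {pm (pn b), pm b} = 1" "yB {pm b, b} = -1"
  proof -
    show "yB {b, pn b} = 1" using inB pn_N[OF bn] VD_pnM[OF b] unfolding yB_def d_def chi_def by simp
    show "yB {pn b, pm (pn b)} = -1" using inB pm_M[OF b1n] VD_pmN[OF b1V] unfolding yB_def d_def chi_def by simp
    show "yB {pm (pn b), pm b} = 1" using inB pn_N[OF b3n] VD_pnM[OF b3V] closB' unfolding yB_def d_def chi_def by simp
    have "{pm b, b} = {b, pm b}" by (simp add: insert_commute)
    thus "yB {pm b, b} = -1" using inB pm_M[OF bn] VD_pmN[OF b] unfolding yB_def d_def chi_def by simp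
  qed
  have distA: "distinct [a, pm a, pn (pm a), pn a]" using FA by auto
  have distB: "distinct [b, pn b, pm (pn b), pm b]" using FB by auto
  have IA: "(\<Sum>e\<in>{e\<in>Kedges n. e \<subseteq> S}. y e) = 0" if "odd (card (S \<inter> A))" for S
  proof (rule cyc4[where z=y and s="-1", OF distA an' a1n a3n a2n])
    show "y {a, pm a} = -1" using yv by simp
    show "\<And>e. e \<notin> {{a, pm a}, {pm a, pn (pm a)}, {pn (pm a), pn a}, {pn a, a}} \<Longrightarrow> y e = 0" using eA by blast
    show "y {pm a, pn (pm a)} = - (-1)" using yv by simp
    show "y {pn (pm a), pn a} = -1" using yv by simp
    show "y {pn a, a} = - (-1)" using yv by simp
    have "A = {a, pm a, pn (pm a), pn a}" unfolding A_def blA_def by auto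
    thus "odd (card (S \<inter> {a, pm a, pn (pm a), pn a}))" using that by simp
  qed
  have IB: "(\<Sum>e\<in>{e\<in>Kedges n. e \<subseteq> S}. yB e) = 0" if "odd (card (S \<inter> B))" for S
  proof (rule cyc4[where z=yB and s="1", OF distB bn b1n b3n b2n])
    show "yB {b, pn b} = 1" using ybv by simp
    show "\<And>e. e \<notin> {{b, pn b}, {pn b, pm (pn b)}, {pm (pn b), pm b}, {pm b, b}} \<Longrightarrow> yB e = 0" using eB by blast
    show "yB {pn b, pm (pn b)} = - 1" using ybv by simp
    show "yB {pm (pn b), pm b} = 1" using ybv by simp
    show "yB {pm b, b} = - 1" using ybv by simp
    have "B = {b, pn b, pm (pn b), pm b}" unfolding B_def blB_def by auto
    thus "odd (card (S \<inter> {b, pn b, pm (pn b), pm b}))" using that by simp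
  qed
  have sub: "suppB n y \<subseteq> suppB n d"
  proof
    fix x assume x: "x \<in> suppB n y"
    show "x \<in> suppB n d"
    proof (cases x)
      case (Inr e)
      hence "e \<in> Kedges n" "y e \<noteq> 0" using x unfolding suppB_def by auto
      moreover hence "d e \<noteq> 0" unfolding y_def by (auto split: if_splits)
      ultimately show ?thesis using Inr unfolding suppB_def by auto
    next
      case (Inl S)
      hence oS: "odd_set n S" and ny: "xsum y (cut n S) \<noteq> 0" using x unfolding suppB_def by auto
      have Sn: "S \<subseteq> {..<n}" using oS unfolding odd_set_def by auto
      have fS: "finite S" using Sn finite_subset by blast
      have "card S = card (S \<inter> A) + card (S \<inter> B)"
      proof -
        have "S = (S \<inter> A) \<union> (S \<inter> B)" using Sn cov unfolding A_def B_def by auto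
        moreover have "(S \<inter> A) \<inter> (S \<inter> B) = {}" using dj unfolding A_def B_def by auto
        ultimately show ?thesis using fS card_Un_disjoint[of "S \<inter> A" "S \<inter> B"] by (metis finite_Int)
      qed
      hence par: "odd (card (S \<inter> A)) \<or> odd (card (S \<inter> B))" using oS unfolding odd_set_def by auto
      have Iy: "(\<Sum>e\<in>{e\<in>Kedges n. e \<subseteq> S}. y e) \<noteq> 0" using ny XS[OF ykA Sn] by simp
      hence "odd (card (S \<inter> B))" using par IA by blast
      hence IyB: "(\<Sum>e\<in>{e\<in>Kedges n. e \<subseteq> S}. yB e) = 0" by (rule IB)
      have "xsum d (cut n S) = xsum y (cut n S) + xsum yB (cut n S)"
        unfolding xsum_def using dy by (simp add: sum.distrib)
      also have "\<dots> = xsum y (cut n S)" using XS[OF ybkA Sn] IyB by simp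
      finally have "xsum d (cut n S) \<noteq> 0" using ny by simp
      thus ?thesis using Inl oS unfolding suppB_def by auto
    qed
  qed
  have e0: "{b, pm b} \<in> Kedges n" using pm_M[OF bn] M_K by auto
  have "d {b, pm b} \<noteq> 0" using pm_M[OF bn] VD_pmN[OF b] unfolding d_def chi_def by simp
  hence in1: "Inr {b, pm b} \<in> suppB n d" using e0 unfolding suppB_def by auto
  have "\<not> {b, pm b} \<subseteq> A" using inB(2) djx unfolding A_def B_def by auto
  hence "Inr {b, pm b} \<notin> suppB n y" unfolding suppB_def y_def by auto
  hence psub: "suppB n y \<subset> suppB n d" using sub in1 by blast
  have ynz: "y \<noteq> (\<lambda>_. 0)" using yv(1) by (metis zero_neq_neg_one)
  have "\<exists>y \<in> RE n. y \<noteq> (\<lambda>_. 0) \<and> kerA n y \<and> suppB n y \<subset> suppB n d" using yRE ynz ykA psub by blast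
  thus False using c unfolding circuit_def by blast
qed

end




definition fmatch :: "nat \<Rightarrow> (nat \<Rightarrow> nat) \<Rightarrow> nat set set" where
  "fmatch n f = {{v, f v} | v. v < n}"

lemma fmatch_pm:
  assumes f: "\<And>v. v < n \<Longrightarrow> f v < n" "\<And>v. v < n \<Longrightarrow> f v \<noteq> v" "\<And>v. v < n \<Longrightarrow> f (f v) = v"
  shows "perfect_matching n (fmatch n f)" "\<And>v. v < n \<Longrightarrow> partner (fmatch n f) v = f v"
proof -
  show pm: "perfect_matching n (fmatch n f)"
    unfolding perfect_matching_def
  proof
    show "fmatch n f \<subseteq> Kedges n"
    proof
      fix e assume "e \<in> fmatch n f"
      then obtain v where v: "v < n" "e = {v, f v}" unfolding fmatch_def by auto
      thus "e \<in> Kedges n" using f(1)[OF v(1)] f(2)[OF v(1)] by (simp add: Kedges_mem)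
    qed
    show "\<forall>v<n. card {e \<in> fmatch n f. v \<in> e} = 1"
    proof (intro allI impI)
      fix v assume v: "v < n"
      have "{e \<in> fmatch n f. v \<in> e} = {{v, f v}}"
      proof
        show "{e \<in> fmatch n f. v \<in> e} \<subseteq> {{v, f v}}"
        proof
          fix e assume "e \<in> {e \<in> fmatch n f. v \<in> e}"
          then obtain u where u: "u < n" "e = {u, f u}" "v \<in> e" unfolding fmatch_def by auto
          hence "v = u \<or> v = f u" by auto
          thus "e \<in> {{v, f v}}"
          proof
            assume "v = u" thus ?thesis using u by simp
          next
            assume "v = f u" hence "f v = u" using f(3)[OF u(1)] by simp
            thus ?thesis using u \<open>v = f u\<close> by (auto simp: insert_commute)
          qed
        qed
        show "{{v, f v}} \<subseteq> {e \<in> fmatch n f. v \<in> e}" unfolding fmatch_def using v by auto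
      qed
      thus "card {e \<in> fmatch n f. v \<in> e} = 1" by simp
    qed
  qed
  fix v assume v: "v < n"
  have "{v, f v} \<in> fmatch n f" unfolding fmatch_def using v by auto
  thus "partner (fmatch n f) v = f v" using partner_eq[OF pm v] by simp
qed

definition f1 :: "nat \<Rightarrow> nat" where "f1 v = (if even v then v + 1 else v - 1)"
definition f2 :: "nat \<Rightarrow> nat" where "f2 v = (if v < 4 then 3 - v else f1 v)"
definition g0 :: "nat \<Rightarrow> nat" where "g0 v = (if v < 4 then 3 - v else 11 - v)"

lemma f1_props:
  assumes "even n" "v < n"
  shows "f1 v < n" "f1 v \<noteq> v" "f1 (f1 v) = v"
proof -
  show "f1 v < n" using assms unfolding f1_def by (auto elim: oddE evenE) presburger
  show "f1 v \<noteq> v" unfolding f1_def using odd_pos[of v] by auto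
  show "f1 (f1 v) = v" unfolding f1_def by (cases "even v") (auto elim: oddE)
qed


lemma f2_props:
  assumes "even n" "n \<ge> 4" "v < n"
  shows "f2 v < n" "f2 v \<noteq> v" "f2 (f2 v) = v"
proof -
  show "f2 v < n" using assms f1_props(1)[OF assms(1,3)] unfolding f2_def by auto
  show "f2 v \<noteq> v"
  proof (cases "v < 4")
    case True thus ?thesis unfolding f2_def by presburger
  next
    case False thus ?thesis using f1_props(2)[OF assms(1,3)] unfolding f2_def by simp
  qed
  show "f2 (f2 v) = v"
  proof (cases "v < 4")
    case True thus ?thesis unfolding f2_def by auto
  next
    case False
    have "f1 v \<ge> 4" using False unfolding f1_def by (auto elim: oddE)
    thus ?thesis using False f1_props(3)[OF assms(1,3)] unfolding f2_def by simp
  qed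
qed

lemma lt8: "(v::nat) < 8 \<Longrightarrow> v = 0 \<or> v = 1 \<or> v = 2 \<or> v = 3 \<or> v = 4 \<or> v = 5 \<or> v = 6 \<or> v = 7"
  by auto

lemma g0_props:
  assumes "v < 8"
  shows "g0 v < 8" "g0 v \<noteq> v" "g0 (g0 v) = v"
  using lt8[OF assms] unfolding g0_def by (elim disjE; simp)+

lemma M12:
  assumes "even n" "n \<ge> 4"
  shows "perfect_matching n (fmatch n f1)" "perfect_matching n (fmatch n f2)" "fmatch n f1 \<noteq> fmatch n f2"
proof -
  note F1 = fmatch_pm[of n f1, OF f1_props(1)[OF assms(1)] f1_props(2)[OF assms(1)] f1_props(3)[OF assms(1)]]
  note F2 = fmatch_pm[of n f2, OF f2_props(1)[OF assms] f2_props(2)[OF assms] f2_props(3)[OF assms]]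
  show "perfect_matching n (fmatch n f1)" using F1(1) .
  show "perfect_matching n (fmatch n f2)" using F2(1) .
  have "partner (fmatch n f1) 0 = 1" using F1(2)[of 0] assms(2) unfolding f1_def by simp
  moreover have "partner (fmatch n f2) 0 = 3" using F2(2)[of 0] assms(2) unfolding f2_def by simp
  ultimately show "fmatch n f1 \<noteq> fmatch n f2" by auto
qed

definition "M0 = fmatch 8 f1"
definition "N0 = fmatch 8 g0"

lemma PM0: "perfect_matching 8 M0" and pM0: "v < 8 \<Longrightarrow> partner M0 v = f1 v"
  using fmatch_pm[of 8 f1, OF f1_props(1)[of 8] f1_props(2)[of 8] f1_props(3)[of 8]]
  unfolding M0_def by simp_all

lemma PN0: "perfect_matching 8 N0" and pN0: "v < 8 \<Longrightarrow> partner N0 v = g0 v"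
  using fmatch_pm[of 8 g0, OF g0_props(1) g0_props(2) g0_props(3)]
  unfolding N0_def by simp_all

lemma COV0: "COV 8 M0 N0 0 4"
proof -
  interpret T0: TPM 8 M0 N0 using PM0 PN0 by unfold_locales
  have pm: "partner M0 0 = 1" "partner M0 1 = 0" "partner M0 4 = 5" "partner M0 7 = 6"
    using pM0 unfolding f1_def by simp_all
  have pn: "partner N0 0 = 3" "partner N0 1 = 2" "partner N0 4 = 7" "partner N0 5 = 6"
    using pN0 unfolding g0_def by simp_all
  show ?thesis
  proof (unfold_locales)
    show "0 \<in> T0.VD" unfolding T0.VD_def using pm pn by simp
    show "4 \<in> T0.VD" unfolding T0.VD_def using pm pn by simp
    show "T0.blA 0 \<inter> T0.blB 4 = {}" unfolding T0.blA_def T0.blB_def using pm pn by simp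
    show "{..<8} \<subseteq> T0.blA 0 \<union> T0.blB 4" unfolding T0.blA_def T0.blB_def using pm pn by auto
  qed
qed


lemma walk_pair:
  assumes PM: "perfect_matching n M" and PN: "perfect_matching n N"
  shows "\<exists>l \<le> (if n = 8 then 2 else 1). circuit_walk n (P_perfmatch n) (chi M) (chi N) l"
proof (cases "M = N")
  case True
  thus ?thesis using walk0[OF chi_in_P[OF PM]] by (intro exI[of _ 0]) simp
next
  case False
  interpret T: TPM n M N using PM PN by unfold_locales
  show ?thesis
  proof (cases "\<forall>a b. a \<in> T.VD \<longrightarrow> b \<in> T.VD \<longrightarrow> T.blA a \<inter> T.blB b = {} \<longrightarrow> (\<exists>p<n. p \<notin> T.blA a \<union> T.blB b)")
    case True
    have c: "circuit n T.d"
    proof (rule T.circ[OF False])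
      fix a b assume "a \<in> T.VD" "b \<in> T.VD" "T.blA a \<inter> T.blB b = {}"
      thus "\<exists>p<n. p \<notin> T.blA a \<union> T.blB b" using True by blast
    qed
    have "circuit_walk n (P_perfmatch n) (chi M) (chi N) 1"
      using walk1[OF T.step[OF False c] chi_in_P[OF PN]] .
    thus ?thesis by (intro exI[of _ 1]) simp
  next
    case F2: False
    then obtain a b where ab: "a \<in> T.VD" "b \<in> T.VD" "T.blA a \<inter> T.blB b = {}"
      and np: "\<not> (\<exists>p<n. p \<notin> T.blA a \<union> T.blB b)" by blast
    have n8: "n = 8" using T.sep_n[OF _ ab] np by blast
    have cov: "{..<n} \<subseteq> T.blA a \<union> T.blB b" using np by auto
    interpret C: COV n M N a b using ab cov by unfold_locales
    show ?thesis using C.two_walk n8 by (intro exI[of _ 2]) simp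
  qed
qed

lemma dist_M0N0: "circuit_distance 8 (P_perfmatch 8) (chi M0) (chi N0) = 2"
proof -
  interpret C0: COV 8 M0 N0 0 4 by (rule COV0)
  let ?P = "P_perfmatch 8"
  have w2: "circuit_walk 8 ?P (chi M0) (chi N0) 2" by (rule C0.two_walk)
  define l0 where "l0 = (LEAST l. circuit_walk 8 ?P (chi M0) (chi N0) l)"
  have wl: "circuit_walk 8 ?P (chi M0) (chi N0) l0" unfolding l0_def using w2 by (rule LeastI)
  have le: "l0 \<le> 2" unfolding l0_def using w2 by (rule Least_le)
  have ne: "M0 \<noteq> N0"
  proof
    assume "M0 = N0"
    hence "partner M0 0 = partner N0 0" by simp
    thus False using pM0[of 0] pN0[of 0] unfolding f1_def g0_def by simp
  qed
  have n0: "l0 \<noteq> 0"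
  proof
    assume "l0 = 0"
    hence "chi M0 = chi N0" using walk0_eq wl by simp
    thus False using chi_inj ne by blast
  qed
  have n1: "l0 \<noteq> 1"
  proof
    assume "l0 = 1"
    hence "circuit_step 8 ?P (chi M0) (chi N0)" using walk1_step wl by simp
    then obtain c \<alpha> where c: "circuit 8 c" "\<alpha> > 0" "chi N0 = (\<lambda>e. chi M0 e + \<alpha> * c e)"
      unfolding circuit_step_def by blast
    have "C0.d = (\<lambda>e. \<alpha> * c e)"
    proof
      fix e show "C0.d e = \<alpha> * c e" unfolding C0.d_def using fun_cong[OF c(3), of e] by simp
    qed
    hence "circuit 8 C0.d" using circuit_scale[OF c(1), of \<alpha>] c(2) by simp
    thus False using C0.noncirc by simp
  qed
  have "l0 = 2" using le n0 n1 by simp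
  thus ?thesis unfolding circuit_distance_def l0_def .
qed

theorem theorem2:
  fixes n :: nat
  assumes "even n" and "n \<ge> 4"
  shows "circuit_diameter n (P_perfmatch n) =
           (if n = 4 \<or> n = 6 then 1 else if n = 8 then 2 else 1)"
proof -
  let ?P = "P_perfmatch n"
  define k :: nat where "k = (if n = 8 then 2 else 1)"
  have rhs: "(if n = 4 \<or> n = 6 then 1 else if n = 8 then 2 else 1) = k" unfolding k_def by auto
  define D where "D = {circuit_distance n ?P x y | x y. vertex_of x ?P \<and> vertex_of y ?P}"
  have up: "y \<le> k" if yD: "y \<in> D" for y
  proof -
    obtain x x' where xx: "y = circuit_distance n ?P x x'" "vertex_of x ?P" "vertex_of x' ?P"
      using yD unfolding D_def by blast
    obtain M N where MN: "perfect_matching n M" "x = chi M" "perfect_matching n N" "x' = chi N"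
      using vertex_chi[OF xx(2)] vertex_chi[OF xx(3)] by blast
    obtain l where l: "l \<le> k" "circuit_walk n ?P x x' l" using walk_pair[OF MN(1,3)] MN unfolding k_def by blast
    show ?thesis using dist_le[OF l(2)] l(1) xx(1) by simp
  qed
  have kin: "k \<in> D"
  proof (cases "n = 8")
    case True
    have "2 \<in> D" unfolding D_def True using dist_M0N0 chi_vertex[OF PM0] chi_vertex[OF PN0]
      by (metis (mono_tags, lifting) mem_Collect_eq)
    thus ?thesis unfolding k_def using True by simp
  next
    case False
    note M = M12[OF assms]
    obtain l where l: "l \<le> k" "circuit_walk n ?P (chi (fmatch n f1)) (chi (fmatch n f2)) l"
      using walk_pair[OF M(1,2)] unfolding k_def by blast
    have ne: "chi (fmatch n f1) \<noteq> chi (fmatch n f2)" using chi_inj M(3) by blast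
    have "circuit_distance n ?P (chi (fmatch n f1)) (chi (fmatch n f2)) \<ge> 1" using dist_ge1[OF ne l(2)] .
    moreover have "circuit_distance n ?P (chi (fmatch n f1)) (chi (fmatch n f2)) \<le> 1"
      using dist_le[OF l(2)] l(1) False unfolding k_def by simp
    ultimately have "circuit_distance n ?P (chi (fmatch n f1)) (chi (fmatch n f2)) = 1" by simp
    hence "1 \<in> D" unfolding D_def using chi_vertex[OF M(1)] chi_vertex[OF M(2)] by (metis (mono_tags, lifting) mem_Collect_eq)
    thus ?thesis unfolding k_def using False by simp
  qed
  have fin: "finite D" using up by (intro finite_subset[of D "{..k}"]) auto
  have "Max D = k" using Max_eqI[OF fin up kin] by simp
  thus ?thesis unfolding circuit_diameter_def D_def[symmetric] rhs .
qed


end
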